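(* There is a constant $C$ such that for all $\theta\in\mathbb S_1$: (a) $|\partial_Ex(\theta,E)|\le C(E-E_{\min})^{-1/2}$ for $E\in(E_{\min},E_0]$; (b) $|x(\theta,E_1)-x(\theta,E_2)|\le C\sqrt{|E_1-E_2|}$ for $E_1,E_2\in(E_{\min},E_0]$; (c) $|\partial_Ev(\theta,E)|\le C(E-E_{\min})^{-1/2}$ for $E\in(E_{\min},E_0]$; (d) $|v(\theta,E_1)-v(\theta,E_2)|\le C\sqrt{|E_1-E_2|}$ for $E_1,E_2\in(E_{\min},E_0]$.
   Context: Let $E_0>0$ and let $\varphi$ be either a polytrope $\varphi(E)=(E_0-E)_+^k$, $k\ge1$, or the King profile $\varphi(E)=(e^{E_0-E}-1)_+$. Let $(f_0,U_0)$ be the steady state $f_0=\varphi(\frac12v^2+U_0(x))$ of mass $M_0>0$ of the plane-symmetric 1D gravitational Vlasov–Poisson system ($U(x)=2\pi\int|x-y|\rho(y)dy$, $\rho=\int fdv$). Then $U_0\in C^3(\mathbb R)$ even, convex, strictly increasing on $[0,\infty)$, $U_0''(0)=4\pi\rho_0(0)>0$, and $E_0=U_0(R_0)$ where $[-R_0,R_0]$ is the support of $\rho_0$. $E_{\min}=U_0(0)$. For $E\in(E_{\min},E_0]$, $x_-(E)=-x_+(E)<0$ solve $U_0(x)=E$; $T(E)=2\int_{x_-(E)}^{x_+(E)}(2(E-U_0))^{-1/2}dx$ is the period ($C^1$, $T'>0$, bounded). For $E\in(E_{\min},E_0]$, $(X(t,E),V(t,E))$ is the solution of $\dot X=V$,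 $\dot V=-U_0'(X)$ with $(X,V)(0)=(x_-(E),0)$, which is $T(E)$-periodic; $\mathbb S_1=[0,1]$ with $0,1$ identified; $x(\theta,E)=X(\theta T(E),E)$, $v(\theta,E)=V(\theta T(E),E)$. *)

theory Defs
  imports "HOL-Analysis.Analysis"
begin

definition polytrope :: "real \<Rightarrow> real \<Rightarrow> real \<Rightarrow> real" where
  "polytrope E0 k E = (max 0 (E0 - E)) powr k"

definition king :: "real \<Rightarrow> real \<Rightarrow> real" where
  "king E0 E = max 0 (exp (E0 - E) - 1)"

text \<open>Spatial density induced by the potential U via f = phi(v^2/2 + U(x)).\<close>
definition dens :: "(real \<Rightarrow> real) \<Rightarrow> (real \<Rightarrow> real) \<Rightarrow> real \<Rightarrow> real" where
  "dens phi U x = (LINT v|lborel. phi (v\<^sup>2 / 2 + U x))"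

definition xplus :: "(real \<Rightarrow> real) \<Rightarrow> real \<Rightarrow> real" where
  "xplus U E = (THE x. 0 \<le> x \<and> U x = E)"

definition period :: "(real \<Rightarrow> real) \<Rightarrow> real \<Rightarrow> real" where
  "period U E = 2 * (LBINT x = - xplus U E .. xplus U E. 1 / sqrt (2 * (E - U x)))"

end

theory Submission
  imports Defs
begin

locale pot =
  fixes U0 U1 U2 U3 :: "real \<Rightarrow> real"
  assumes D1: "\<And>x. (U0 has_real_derivative U1 x) (at x)"
    and D2: "\<And>x. (U1 has_real_derivative U2 x) (at x)"
    and D3: "\<And>x. (U2 has_real_derivative U3 x) (at x)"
    and U3c: "continuous_on UNIV U3"
    and even: "\<And>x. U0 (- x) = U0 x"
    and cvx: "convex_on UNIV U0"
    and smono: "strict_mono_on {0..} U0"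
    and U20: "U2 0 > 0"
begin

lemma U1_odd: "U1 (- x) = - U1 x"
proof -
  have "((\<lambda>x. U0 (- x)) has_real_derivative - U1 (- x)) (at x)"
    using DERIV_chain2[OF D1 DERIV_minus[OF DERIV_ident]] by simp
  moreover have "(\<lambda>x. U0 (- x)) = U0" using even by auto
  ultimately show ?thesis using D1 DERIV_unique by fastforce
qed

lemma U2_even: "U2 (- x) = U2 x"
proof -
  have "((\<lambda>x. U1 (- x)) has_real_derivative - U2 (- x)) (at x)"
    using DERIV_chain2[OF D2 DERIV_minus[OF DERIV_ident]] by simp
  moreover have "(\<lambda>x. U1 (- x)) = (\<lambda>x. - U1 x)" using U1_odd by auto
  moreover have "((\<lambda>x. - U1 x) has_real_derivative - U2 x) (at x)"
    using D2 by (auto intro!: derivative_eq_intros)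
  ultimately show ?thesis using DERIV_unique by fastforce
qed

lemma U3_odd: "U3 (- x) = - U3 x"
proof -
  have "((\<lambda>x. U2 (- x)) has_real_derivative - U3 (- x)) (at x)"
    using DERIV_chain2[OF D3 DERIV_minus[OF DERIV_ident]] by simp
  moreover have "(\<lambda>x. U2 (- x)) = U2" using U2_even by auto
  ultimately show ?thesis using D3 DERIV_unique by fastforce
qed

lemma U1_0: "U1 0 = 0" using U1_odd[of 0] by simp
lemma U3_0: "U3 0 = 0" using U3_odd[of 0] by simp

lemma cont0: "isCont U0 x" using D1 DERIV_isCont by blast
lemma cont1: "isCont U1 x" using D2 DERIV_isCont by blast
lemma cont2: "isCont U2 x" using D3 DERIV_isCont by blast
lemma cont3: "isCont U3 x" using U3c by (simp add: continuous_on_eq_continuous_at)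

definition "m = U0 0"
definition "P x = U0 x - m"

lemma P_pos: "x \<noteq> 0 \<Longrightarrow> P x > 0"
proof -
  assume "x \<noteq> 0"
  hence "0 < \<bar>x\<bar>" by simp
  hence "U0 0 < U0 \<bar>x\<bar>" using smono by (auto simp: strict_mono_on_def)
  moreover have "U0 \<bar>x\<bar> = U0 x" using even by (cases "x \<ge> 0") (auto simp: abs_if)
  ultimately show ?thesis by (simp add: P_def m_def)
qed

lemma P_0: "P 0 = 0" by (simp add: P_def m_def)
lemma P_nonneg: "P x \<ge> 0" using P_pos[of x] P_0 by (cases "x = 0") auto

lemma U1_pos: "x > 0 \<Longrightarrow> U1 x > 0"
proof -
  assume x: "x > 0"
  have "U0 0 - U0 x \<ge> U1 x * (0 - x)"
    by (rule convex_on_imp_above_tangent[OF cvx]) (auto simp: D1 has_field_derivative_at_within)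
  hence "U1 x * x \<ge> P x" by (simp add: P_def m_def algebra_simps)
  moreover have "P x > 0" using P_pos x by simp
  ultimately have "U1 x * x > 0" by linarith
  thus ?thesis using x by (simp add: zero_less_mult_iff)
qed

lemma U1_neg: "x < 0 \<Longrightarrow> U1 x < 0"
  using U1_pos[of "-x"] U1_odd[of x] by simp


lemma P_deriv: "(P has_real_derivative U1 x) (at x)"
  unfolding P_def[abs_def] by (auto intro!: derivative_eq_intros D1)

lemma P_cont: "isCont P x" using P_deriv DERIV_isCont by blast

lemma lim_U1: "((\<lambda>y. U1 y / y) \<longlongrightarrow> U2 0) (at 0)"
  using D2[of 0] unfolding has_field_derivative_iff by (simp add: U1_0)

lemma lim_P: "((\<lambda>x. P x / x^2) \<longlongrightarrow> U2 0 / 2) (at 0)"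
proof (rule lhopital[where f' = U1 and g' = "\<lambda>x. 2 * x"])
  show "(P \<longlongrightarrow> 0) (at 0)" using P_cont[of 0] P_0 by (simp add: isCont_def)
  show "((\<lambda>x. x^2) \<longlongrightarrow> (0::real)) (at 0)" by (auto intro!: tendsto_eq_intros)
  show "\<forall>\<^sub>F x in at 0. x^2 \<noteq> (0::real)" by (auto simp: eventually_at_filter)
  show "\<forall>\<^sub>F x in at 0. 2 * x \<noteq> (0::real)" by (auto simp: eventually_at_filter)
  show "\<forall>\<^sub>F x in at 0. (P has_real_derivative U1 x) (at x)" using P_deriv by simp
  show "\<forall>\<^sub>F x in at 0. ((\<lambda>x. x^2) has_real_derivative 2 * x) (at x)"
    by (intro always_eventually allI) (auto intro!: derivative_eq_intros)
  show "((\<lambda>x. U1 x / (2 * x)) \<longlongrightarrow> U2 0 / 2) (at 0)"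
    using tendsto_divide[OF lim_U1 tendsto_const[of 2]] by (simp add: mult.commute)
qed

definition "g x = sgn x * sqrt (2 * P x)"
definition "g1 x = (if x = 0 then sqrt (U2 0) else U1 x / g x)"
definition "Q x = 2 * U2 x * P x - (U1 x)^2"
definition "g2 x = (if x = 0 then 0 else Q x / (g x)^3)"

lemma g_sq: "(g x)^2 = 2 * P x"
  by (cases "x = 0") (auto simp: g_def P_0 power_mult_distrib P_nonneg sgn_if)

lemma g_0: "g 0 = 0" by (simp add: g_def)
lemma g_pos: "x > 0 \<Longrightarrow> g x > 0" using P_pos[of x] by (simp add: g_def)
lemma g_neg: "x < 0 \<Longrightarrow> g x < 0" using P_pos[of x] by (simp add: g_def)
lemma g_nz: "x \<noteq> 0 \<Longrightarrow> g x \<noteq> 0" by (metis g_pos g_neg less_irrefl linorder_neqE_linordered_idom)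

lemma lim_g: "((\<lambda>x. g x / x) \<longlongrightarrow> sqrt (U2 0)) (at 0)"
proof -
  have "((\<lambda>x. sqrt (2 * (P x / x^2))) \<longlongrightarrow> sqrt (2 * (U2 0 / 2))) (at 0)"
    by (intro tendsto_intros lim_P)
  moreover have aux: "sqrt (2 * (P x / x^2)) = g x / x" if "x \<noteq> 0" for x
  proof -
    have "sqrt (2 * (P x / x^2)) = sqrt (2 * P x) / \<bar>x\<bar>"
      by (simp add: real_sqrt_divide)
    also have "\<dots> = g x / x" using \<open>x \<noteq> 0\<close>
      by (cases "x > 0") (auto simp: g_def)
    finally show "sqrt (2 * (P x / x^2)) = g x / x" .
  qed
  hence "\<forall>\<^sub>F x in at 0. sqrt (2 * (P x / x^2)) = g x / x"
    by (auto simp: eventually_at_filter)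
  ultimately show ?thesis by (auto dest: tendsto_cong[THEN iffD1, rotated])
qed

lemma g_deriv0: "(g has_real_derivative g1 0) (at 0)"
  unfolding has_field_derivative_iff using lim_g by (simp add: g_0 g1_def)

lemma g_deriv_pos: "x > 0 \<Longrightarrow> (g has_real_derivative g1 x) (at x)"
proof -
  assume x: "x > 0"
  have "((\<lambda>y. sqrt (2 * P y)) has_real_derivative inverse (sqrt (2 * P x)) / 2 * (2 * U1 x)) (at x)"
    by (rule DERIV_chain2[OF DERIV_real_sqrt]) (use P_pos[of x] x in \<open>auto intro!: derivative_eq_intros P_deriv\<close>)
  moreover have "inverse (sqrt (2 * P x)) / 2 * (2 * U1 x) = g1 x"
    using x by (simp add: g1_def g_def field_simps)
  ultimately have "((\<lambda>y. sqrt (2 * P y)) has_real_derivative g1 x) (at x)" by simp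
  thus ?thesis
    by (rule has_field_derivative_transform_within_open[where S="{0<..}"]) (use x in \<open>auto simp: g_def\<close>)
qed

lemma g_deriv_neg: "x < 0 \<Longrightarrow> (g has_real_derivative g1 x) (at x)"
proof -
  assume x: "x < 0"
  have "((\<lambda>y. - sqrt (2 * P y)) has_real_derivative - (inverse (sqrt (2 * P x)) / 2 * (2 * U1 x))) (at x)"
    by (intro DERIV_minus DERIV_chain2[OF DERIV_real_sqrt]) (use P_pos[of x] x in \<open>auto intro!: derivative_eq_intros P_deriv\<close>)
  moreover have "- (inverse (sqrt (2 * P x)) / 2 * (2 * U1 x)) = g1 x"
    using x by (simp add: g1_def g_def field_simps)
  ultimately have "((\<lambda>y. - sqrt (2 * P y)) has_real_derivative g1 x) (at x)" by simp
  thus ?thesis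
    by (rule has_field_derivative_transform_within_open[where S="{..<0}"]) (use x in \<open>auto simp: g_def\<close>)
qed

lemma g_deriv: "(g has_real_derivative g1 x) (at x)"
  using g_deriv0 g_deriv_pos g_deriv_neg by (cases x "0::real" rule: linorder_cases) auto

lemma g_cont: "isCont g x" using g_deriv DERIV_isCont by blast

lemma g1_pos: "g1 x > 0"
proof (cases x "0::real" rule: linorder_cases)
  case less thus ?thesis using U1_neg g_neg by (simp add: g1_def divide_neg_neg)
next
  case equal thus ?thesis using U20 by (simp add: g1_def)
next
  case greater thus ?thesis using U1_pos g_pos by (simp add: g1_def)
qed

lemma g_g1: "g x * g1 x = U1 x"
  by (cases "x = 0") (auto simp: g1_def g_0 U1_0 g_nz)

lemma g1_cont0: "isCont g1 0"
proof -
  have "((\<lambda>x. (U1 x / x) / (g x / x)) \<longlongrightarrow> U2 0 / sqrt (U2 0)) (at 0)"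
    by (rule tendsto_divide[OF lim_U1 lim_g]) (use U20 in simp)
  moreover have "U2 0 / sqrt (U2 0) = g1 0" using U20
    by (simp add: g1_def) (metis less_eq_real_def real_div_sqrt)
  moreover have "\<forall>\<^sub>F x in at 0. (U1 x / x) / (g x / x) = g1 x"
    by (auto simp: eventually_at_filter g1_def)
  ultimately have "(g1 \<longlongrightarrow> g1 0) (at 0)" by (auto dest: tendsto_cong[THEN iffD1, rotated])
  thus ?thesis by (simp add: isCont_def)
qed

lemma Q_deriv: "(Q has_real_derivative 2 * U3 x * P x) (at x)"
  unfolding Q_def[abs_def] by (auto intro!: derivative_eq_intros D1 D2 D3 P_deriv simp: algebra_simps)

lemma Q_0: "Q 0 = 0" by (simp add: Q_def P_0 U1_0)
lemma Q_cont: "isCont Q x" using Q_deriv DERIV_isCont by blast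

lemma lim_Q: "((\<lambda>x. Q x / x^3) \<longlongrightarrow> 0) (at 0)"
proof (rule lhopital[where f' = "\<lambda>x. 2 * U3 x * P x" and g' = "\<lambda>x. 3 * x^2"])
  show "(Q \<longlongrightarrow> 0) (at 0)" using Q_cont[of 0] Q_0 by (simp add: isCont_def)
  show "((\<lambda>x. x^3) \<longlongrightarrow> (0::real)) (at 0)" by (auto intro!: tendsto_eq_intros)
  show "\<forall>\<^sub>F x in at 0. x^3 \<noteq> (0::real)" by (auto simp: eventually_at_filter)
  show "\<forall>\<^sub>F x in at 0. 3 * x^2 \<noteq> (0::real)" by (auto simp: eventually_at_filter)
  show "\<forall>\<^sub>F x in at 0. (Q has_real_derivative 2 * U3 x * P x) (at x)" using Q_deriv by simp
  show "\<forall>\<^sub>F x in at 0. ((\<lambda>x. x^3) has_real_derivative 3 * x^2) (at x)"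
    by (intro always_eventually allI) (auto intro!: derivative_eq_intros)
  have "((\<lambda>x. 2 / 3 * U3 x * (P x / x^2)) \<longlongrightarrow> 2 / 3 * U3 0 * (U2 0 / 2)) (at 0)"
    by (intro tendsto_intros lim_P) (use cont3[of 0] in \<open>simp add: isCont_def\<close>)
  moreover have "\<forall>\<^sub>F x in at 0. 2 / 3 * U3 x * (P x / x^2) = 2 * U3 x * P x / (3 * x^2)"
    by (auto simp: eventually_at_filter)
  ultimately show "((\<lambda>x. 2 * U3 x * P x / (3 * x^2)) \<longlongrightarrow> 0) (at 0)"
    by (auto simp: U3_0 dest: tendsto_cong[THEN iffD1, rotated])
qed

lemma lim_g2: "(g2 \<longlongrightarrow> 0) (at 0)"
proof -
  have "((\<lambda>x. (Q x / x^3) / (g x / x)^3) \<longlongrightarrow> 0 / (sqrt (U2 0))^3) (at 0)"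
    by (intro tendsto_intros lim_Q lim_g) (use U20 in simp)
  moreover have "\<forall>\<^sub>F x in at 0. (Q x / x^3) / (g x / x)^3 = g2 x"
    by (auto simp: eventually_at_filter g2_def power_divide)
  ultimately show ?thesis by (auto dest: tendsto_cong[THEN iffD1, rotated])
qed


lemma g1_deriv_nz: "x \<noteq> 0 \<Longrightarrow> (g1 has_real_derivative g2 x) (at x)"
proof -
  assume x: "x \<noteq> 0"
  have gx: "g x \<noteq> 0" using g_nz x by simp
  have d: "((\<lambda>y. U1 y / g y) has_real_derivative (U2 x * g x - U1 x * g1 x) / (g x * g x)) (at x)"
    by (rule DERIV_divide[OF D2 g_deriv gx])
  have g1x: "g1 x = U1 x / g x" using x by (simp add: g1_def)
  have "(U2 x * g x - U1 x * (U1 x / g x)) / (g x * g x) = (U2 x * (g x)^2 - U1 x ^2) / (g x)^3"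
    using gx by (simp add: field_simps power2_eq_square power3_eq_cube)
  also have "\<dots> = g2 x" using x by (simp add: g2_def Q_def g_sq)
  finally have "(U2 x * g x - U1 x * g1 x) / (g x * g x) = g2 x" using g1x by simp
  with d have d': "((\<lambda>y. U1 y / g y) has_real_derivative g2 x) (at x)" by simp
  show ?thesis
  proof (cases "x > 0")
    case True thus ?thesis
      by (intro has_field_derivative_transform_within_open[OF d', where S="{0<..}"]) (auto simp: g1_def)
  next
    case False hence "x < 0" using x by simp
    thus ?thesis
      by (intro has_field_derivative_transform_within_open[OF d', where S="{..<0}"]) (auto simp: g1_def)
  qed
qed

lemma g1_cont: "isCont g1 x"
  using g1_cont0 g1_deriv_nz DERIV_isCont by (cases "x = 0") auto

lemma g1_mvt: "y \<noteq> 0 \<Longrightarrow> \<exists>\<xi>. 0 < \<bar>\<xi>\<bar> \<and> \<bar>\<xi>\<bar> < \<bar>y\<bar> \<and> g1 y - g1 0 = y * g2 \<xi>"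
proof -
  assume y: "y \<noteq> 0"
  have cont: "continuous_on {a..b} g1" for a b
    using g1_cont by (simp add: continuous_at_imp_continuous_on)
  have diff: "\<And>z. z \<noteq> 0 \<Longrightarrow> g1 differentiable (at z)"
    using g1_deriv_nz real_differentiable_def by blast
  show ?thesis
  proof (cases "y > 0")
    case True
    have "\<exists>l z. 0 < z \<and> z < y \<and> DERIV g1 z :> l \<and> g1 y - g1 0 = (y - 0) * l"
      by (rule MVT[OF True cont]) (use diff in auto)
    then obtain l z where z: "0 < z" "z < y" "(g1 has_real_derivative l) (at z)" "g1 y - g1 0 = (y - 0) * l"
      by blast
    hence "l = g2 z" using g1_deriv_nz[of z] DERIV_unique by auto
    thus ?thesis using z by (intro exI[of _ z]) auto
  next
    case False hence yn: "y < 0" using y by simp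
    have "\<exists>l z. y < z \<and> z < 0 \<and> DERIV g1 z :> l \<and> g1 0 - g1 y = (0 - y) * l"
      by (rule MVT[OF yn cont]) (use diff in auto)
    then obtain l z where z: "y < z" "z < 0" "(g1 has_real_derivative l) (at z)" "g1 0 - g1 y = (0 - y) * l"
      by blast
    hence "l = g2 z" using g1_deriv_nz[of z] DERIV_unique by auto
    thus ?thesis using z yn by (intro exI[of _ z]) (auto simp: algebra_simps)
  qed
qed

lemma g1_deriv0: "(g1 has_real_derivative g2 0) (at 0)"
proof -
  have "((\<lambda>y. (g1 y - g1 0) / (y - 0)) \<longlongrightarrow> g2 0) (at 0)"
  proof (rule tendstoI)
    fix e :: real assume e: "e > 0"
    obtain d where d: "d > 0" "\<And>x. x \<noteq> 0 \<Longrightarrow> dist x 0 < d \<Longrightarrow> dist (g2 x) 0 < e"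
      using lim_g2[unfolded tendsto_iff, rule_format, OF e] by (auto simp: eventually_at)
    have "\<forall>y. y \<noteq> 0 \<and> dist y 0 < d \<longrightarrow> dist ((g1 y - g1 0) / (y - 0)) (g2 0) < e"
    proof (intro allI impI)
      fix y :: real assume y: "y \<noteq> 0 \<and> dist y 0 < d"
      then obtain \<xi> where xi: "0 < \<bar>\<xi>\<bar>" "\<bar>\<xi>\<bar> < \<bar>y\<bar>" "g1 y - g1 0 = y * g2 \<xi>"
        using g1_mvt by blast
      have "dist (g2 \<xi>) 0 < e" using d(2)[of \<xi>] xi y by auto
      thus "dist ((g1 y - g1 0) / (y - 0)) (g2 0) < e" using xi y by (simp add: g2_def)
    qed
    thus "\<forall>\<^sub>F y in at 0. dist ((g1 y - g1 0) / (y - 0)) (g2 0) < e"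
      unfolding eventually_at using d(1) by blast
  qed
  thus ?thesis unfolding has_field_derivative_iff .
qed

lemma g1_deriv: "(g1 has_real_derivative g2 x) (at x)"
  using g1_deriv0 g1_deriv_nz by (cases "x = 0") auto

lemma g2_cont: "isCont g2 x"
proof (cases "x = 0")
  case True thus ?thesis using lim_g2 by (simp add: isCont_def g2_def)
next
  case False
  have "isCont (\<lambda>y. Q y / (g y)^3) x"
    using False g_nz[OF False] by (intro continuous_intros Q_cont g_cont) auto
  moreover have "\<forall>\<^sub>F y in nhds x. g2 y = Q y / (g y)^3"
  proof -
    have "\<forall>\<^sub>F y in nhds x. y \<noteq> 0"
      using False by (intro t1_space_nhds) auto
    thus ?thesis by eventually_elim (simp add: g2_def)
  qed
  ultimately show ?thesis using isCont_cong[of g2 _ x] by simp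
qed

end

context pot begin

lemma g_mono: "x < y \<Longrightarrow> g x < g y"
  by (rule DERIV_pos_imp_increasing) (use g_deriv g1_pos in auto)

lemma g_inj: "g x = g y \<Longrightarrow> x = y"
  using g_mono by (metis less_irrefl linorder_neqE_linordered_idom)

lemma P_even: "P (- x) = P x" by (simp add: P_def even)

lemma g_odd: "g (- x) = - g x" by (simp add: g_def P_even)

lemma g_big: "\<exists>x. g x \<ge> y"
proof -
  have t: "U0 x - U0 1 \<ge> U1 1 * (x - 1)" for x
    by (rule convex_on_imp_above_tangent[OF cvx]) (auto simp: D1 has_field_derivative_at_within)
  have u: "U1 1 > 0" using U1_pos by simp
  define x where "x = 1 + y^2 / (2 * U1 1)"
  have "P x \<ge> U1 1 * (x - 1)" using t[of x] P_pos[of 1] by (simp add: P_def)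
  also have "U1 1 * (x - 1) = y^2 / 2" using u by (simp add: x_def)
  finally have "2 * P x \<ge> y^2" by simp
  hence "sqrt (2 * P x) \<ge> y" by (rule real_le_rsqrt)
  moreover have "x > 0" using u by (simp add: x_def add_pos_nonneg)
  ultimately show ?thesis by (intro exI[of _ x]) (simp add: g_def)
qed

lemma g_surj: "\<exists>x. g x = y"
proof -
  obtain b where b: "g b \<ge> y" using g_big by blast
  obtain a' where a': "g a' \<ge> - y" using g_big by blast
  define a where "a = min (- a') b"
  have "g a \<le> g (- a')" unfolding a_def using g_mono by (cases "- a' \<le> b") (auto simp: min_def less_eq_real_def)
  hence ga: "g a \<le> y" using a' g_odd[of a'] by simp
  have "a \<le> b" by (simp add: a_def)
  thus ?thesis using IVT[of g a y b] ga b g_cont by blast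
qed

lemma g1_nz: "g1 x \<noteq> 0" using g1_pos[of x] by simp

definition "G y = (THE x. g x = y)"

lemma gG: "g (G y) = y"
  unfolding G_def by (rule theI') (use g_surj g_inj in blast)

lemma Gg: "G (g x) = x" using gG[of "g x"] g_inj by blast

lemma G_mono: "y < z \<Longrightarrow> G y < G z"
  by (metis gG g_mono less_irrefl linorder_neqE_linordered_idom order.asym)

lemma G_mono_le: "y \<le> z \<Longrightarrow> G y \<le> G z"
  using G_mono by (cases "y = z") (auto simp: less_eq_real_def)

lemma G_odd: "G (- y) = - G y" by (metis Gg gG g_odd)

lemma G_cont: "isCont G y"
proof -
  have "isCont G (g (G y))"
    by (rule isCont_inverse_function[where d=1]) (auto simp: Gg g_cont)
  thus ?thesis by (simp add: gG)
qed

definition "Gd1 y = 1 / g1 (G y)"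
definition "Gd2 y = - g2 (G y) * Gd1 y / (g1 (G y))^2"

lemma Gd1_pos: "Gd1 y > 0" using g1_pos by (simp add: Gd1_def)

lemma G_deriv: "(G has_real_derivative Gd1 y) (at y)"
proof -
  have "(G has_real_derivative inverse (g1 (G y))) (at y)"
    by (rule DERIV_inverse_function[where a="y - 1" and b="y + 1"])
       (use g_deriv g1_nz G_cont gG in auto)
  thus ?thesis by (simp add: Gd1_def divide_inverse)
qed

lemma Gd1_cont: "isCont Gd1 y"
  unfolding Gd1_def[abs_def] using g1_pos
  by (intro continuous_intros isCont_o2[OF G_cont g1_cont]) (auto simp: g1_nz)

lemma Gd1_deriv: "(Gd1 has_real_derivative Gd2 y) (at y)"
proof -
  have "((\<lambda>y. 1 / g1 (G y)) has_real_derivative (0 * g1 (G y) - 1 * (g2 (G y) * Gd1 y)) / (g1 (G y) * g1 (G y))) (at y)"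
    by (intro DERIV_divide DERIV_const DERIV_chain2[OF g1_deriv G_deriv]) (auto simp: g1_nz)
  thus ?thesis by (simp add: Gd1_def[abs_def] Gd2_def[of y] power2_eq_square)
qed

lemma Gd2_cont: "isCont Gd2 y"
  unfolding Gd2_def[abs_def] using g1_pos
  by (intro continuous_intros isCont_o2[OF G_cont g2_cont] isCont_o2[OF G_cont g1_cont] Gd1_cont)
     (auto simp: g1_nz)

lemma U1_G: "U1 (G y) = y / Gd1 y"
  using g_g1[of "G y"] by (simp add: gG Gd1_def)

lemma G_0: "G 0 = 0" using Gg[of 0] g_0 by simp

end

context pot begin

lemma Gd1_cont_on: "continuous_on S Gd1" using Gd1_cont by (simp add: continuous_at_imp_continuous_on)
lemma Gd2_cont_on: "continuous_on S Gd2" using Gd2_cont by (simp add: continuous_at_imp_continuous_on)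
lemma G_cont_on: "continuous_on S G" using G_cont by (simp add: continuous_at_imp_continuous_on)

definition "w r \<psi> = Gd1 (- r * cos \<psi>)"
definition "wr r \<psi> = - cos \<psi> * Gd2 (- r * cos \<psi>)"
definition "W r \<phi> = integral {0..\<phi>} (w r)"
definition "Wr r \<phi> = integral {0..\<phi>} (wr r)"
definition "T r = W r (2 * pi)"

lemma w_cont2: "continuous_on S (\<lambda>(r, \<psi>). w r \<psi>)"
  unfolding w_def split_beta
  by (intro continuous_on_compose2[OF Gd1_cont_on[of UNIV]] continuous_intros) auto

lemma wr_cont2: "continuous_on S (\<lambda>(r, \<psi>). wr r \<psi>)"
  unfolding wr_def split_beta
  by (intro continuous_on_compose2[OF Gd2_cont_on[of UNIV]] continuous_intros) auto

lemma w_cont: "continuous_on S (w r)"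
  unfolding w_def by (intro continuous_on_compose2[OF Gd1_cont_on[of UNIV]] continuous_intros) auto

lemma w_isCont: "isCont (w r) x" using w_cont[of UNIV r] by (simp add: continuous_on_eq_continuous_at)

lemma wr_cont: "continuous_on S (wr r)"
  unfolding wr_def by (intro continuous_on_compose2[OF Gd2_cont_on[of UNIV]] continuous_intros) auto

lemma w_pos: "w r \<psi> > 0" by (simp add: w_def Gd1_pos)

lemma w_int: "w r integrable_on {a..b}" by (rule integrable_continuous_real[OF w_cont])
lemma wr_int: "wr r integrable_on {a..b}" by (rule integrable_continuous_real[OF wr_cont])

lemma w_deriv_r: "((\<lambda>r. w r \<psi>) has_real_derivative wr r \<psi>) (at r within S)"
proof -
  have "((\<lambda>r. Gd1 (- r * cos \<psi>)) has_real_derivative Gd2 (- r * cos \<psi>) * (- cos \<psi>)) (at r)"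
    by (rule DERIV_chain2[OF Gd1_deriv]) (auto intro!: derivative_eq_intros)
  thus ?thesis unfolding w_def wr_def by (auto simp: mult.commute intro: has_field_derivative_at_within)
qed

lemma W_deriv_r:
  assumes "r \<in> S" "convex S"
  shows "((\<lambda>r. W r \<phi>) has_real_derivative Wr r \<phi>) (at r within S)"
proof -
  have "((\<lambda>r. integral (cbox 0 \<phi>) (w r)) has_real_derivative integral (cbox 0 \<phi>) (wr r)) (at r within S)"
    by (rule leibniz_rule_field_derivative[OF w_deriv_r _ wr_cont2 assms])
       (use w_int in auto)
  thus ?thesis by (simp add: W_def Wr_def)
qed

lemma W_deriv_phi_within: "0 \<le> \<phi> \<Longrightarrow> \<phi> \<le> b \<Longrightarrow> (W r has_real_derivative w r \<phi>) (at \<phi> within {0..b})"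
  unfolding W_def[abs_def] by (rule integral_has_real_derivative[OF w_cont]) auto

lemma W_deriv_phi: "0 < \<phi> \<Longrightarrow> (W r has_real_derivative w r \<phi>) (at \<phi>)"
  using W_deriv_phi_within[of \<phi> "\<phi> + 1" r] at_within_Icc_at[of 0 \<phi> "\<phi> + 1"] by simp

lemma W_cont: "continuous_on {0..b} (W r)"
  using W_deriv_phi_within[of _ b r]
  by (intro DERIV_continuous_on) auto

lemma W_0: "W r 0 = 0" by (simp add: W_def)

lemma W_diff: "0 \<le> a \<Longrightarrow> a \<le> b \<Longrightarrow> W r b - W r a = integral {a..b} (w r)"
  using Henstock_Kurzweil_Integration.integral_combine[OF _ _ w_int, of 0 a b r] by (simp add: W_def)

lemma int_lower:
  fixes f :: "real \<Rightarrow> real"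
  shows "a \<le> b \<Longrightarrow> (\<And>x. x \<in> {a..b} \<Longrightarrow> c \<le> f x) \<Longrightarrow> f integrable_on {a..b} \<Longrightarrow>
   c * (b - a) \<le> integral {a..b} f"
  using integral_le[of "\<lambda>x. c" "{a..b}" f] integrable_continuous_real[of a b "\<lambda>x. c", OF continuous_on_const]
  by (simp add: mult.commute)

lemma int_upper:
  fixes f :: "real \<Rightarrow> real"
  shows "a \<le> b \<Longrightarrow> (\<And>x. x \<in> {a..b} \<Longrightarrow> f x \<le> c) \<Longrightarrow> f integrable_on {a..b} \<Longrightarrow>
   integral {a..b} f \<le> c * (b - a)"
  using integral_le[of f "{a..b}" "\<lambda>x. c"] integrable_continuous_real[of a b "\<lambda>x. c", OF continuous_on_const]
  by (simp add: mult.commute)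

lemma int_abs:
  fixes f :: "real \<Rightarrow> real"
  shows "a \<le> b \<Longrightarrow> (\<And>x. x \<in> {a..b} \<Longrightarrow> \<bar>f x\<bar> \<le> c) \<Longrightarrow> f integrable_on {a..b} \<Longrightarrow>
   \<bar>integral {a..b} f\<bar> \<le> c * (b - a)"
proof -
  assume ab: "a \<le> b" and b: "\<And>x. x \<in> {a..b} \<Longrightarrow> \<bar>f x\<bar> \<le> c" and i: "f integrable_on {a..b}"
  have "norm (integral {a..b} f) \<le> integral {a..b} (\<lambda>x. c)"
    by (rule integral_norm_bound_integral[OF i]) (use b in auto)
  thus ?thesis using ab by (simp add: mult.commute)
qed

lemma W_strict: "0 \<le> a \<Longrightarrow> a < b \<Longrightarrow> W r a < W r b"
proof -
  assume a: "0 \<le> a" "a < b"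
  have "continuous_on {a..b} (W r)" using W_cont[of b r] by (rule continuous_on_subset) (use a in auto)
  moreover have "\<And>x. a < x \<Longrightarrow> x < b \<Longrightarrow> (W r has_real_derivative w r x) (at x)"
    using a by (intro W_deriv_phi) auto
  ultimately obtain l z where "a < z" "z < b" "(W r has_real_derivative l) (at z)" "W r b - W r a = (b - a) * l"
    using MVT[OF a(2), of "W r"] unfolding real_differentiable_def by blast
  moreover have "l = w r z" using calculation W_deriv_phi[of z r] a DERIV_unique by auto
  moreover have "(b - a) * w r z > 0" using w_pos[of r z] a by (simp add: mult_pos_pos)
  ultimately show ?thesis by simp
qed

lemma W_sym: "W r (2 * pi) = 2 * W r pi"
proof -
  define F where "F x = W r (pi + x) - W r pi - (W r pi - W r (pi - x))" for x
  have cF: "continuous_on {0..pi} F"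
  proof -
    have c: "continuous_on {0..2*pi} (W r)" by (rule W_cont)
    have "continuous_on {0..pi} (\<lambda>x. W r (pi + x))"
      by (rule continuous_on_compose2[OF c]) (auto intro!: continuous_intros)
    moreover have "continuous_on {0..pi} (\<lambda>x. W r (pi - x))"
      by (rule continuous_on_compose2[OF c]) (auto intro!: continuous_intros)
    ultimately show ?thesis unfolding F_def by (intro continuous_intros)
  qed
  have dF: "(F has_real_derivative 0) (at x)" if "0 < x" "x < pi" for x
  proof -
    have "(F has_real_derivative (w r (pi + x) * 1 - 0 - (0 - w r (pi - x) * (-1)))) (at x)"
      unfolding F_def
      by (intro derivative_intros DERIV_chain2[OF W_deriv_phi]) (use that in \<open>auto intro!: derivative_eq_intros\<close>)
    moreover have "w r (pi + x) = w r (pi - x)" by (simp add: w_def)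
    ultimately show ?thesis by simp
  qed
  have "F pi = F 0" by (rule DERIV_isconst2[OF pi_gt_zero cF dF]) auto
  thus ?thesis by (simp add: F_def W_0)
qed

end

context pot begin

lemma exists_cmin: "\<exists>c>0. \<forall>y. \<bar>y\<bar> \<le> r0 \<longrightarrow> c \<le> Gd1 y"
proof -
  obtain x where x: "x \<in> {-\<bar>r0\<bar>..\<bar>r0\<bar>}" "\<forall>y\<in>{-\<bar>r0\<bar>..\<bar>r0\<bar>}. Gd1 x \<le> Gd1 y"
    using continuous_attains_inf[of "{-\<bar>r0\<bar>..\<bar>r0\<bar>}" Gd1] Gd1_cont_on by auto
  thus ?thesis using Gd1_pos[of x] by (intro exI[of _ "Gd1 x"]) (auto simp: abs_le_iff)
qed

lemma exists_Mx1: "\<exists>M\<ge>0. \<forall>y. \<bar>y\<bar> \<le> r0 \<longrightarrow> Gd1 y \<le> M"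
proof -
  obtain x where x: "x \<in> {-\<bar>r0\<bar>..\<bar>r0\<bar>}" "\<forall>y\<in>{-\<bar>r0\<bar>..\<bar>r0\<bar>}. Gd1 y \<le> Gd1 x"
    using continuous_attains_sup[of "{-\<bar>r0\<bar>..\<bar>r0\<bar>}" Gd1] Gd1_cont_on by auto
  thus ?thesis using Gd1_pos[of x] by (intro exI[of _ "Gd1 x"]) (auto simp: abs_le_iff)
qed

lemma exists_Mx2: "\<exists>M\<ge>0. \<forall>y. \<bar>y\<bar> \<le> r0 \<longrightarrow> \<bar>Gd2 y\<bar> \<le> M"
proof -
  have c: "continuous_on {-\<bar>r0\<bar>..\<bar>r0\<bar>} (\<lambda>y. \<bar>Gd2 y\<bar>)"
    by (intro continuous_intros Gd2_cont_on)
  obtain x where x: "x \<in> {-\<bar>r0\<bar>..\<bar>r0\<bar>}" "\<forall>y\<in>{-\<bar>r0\<bar>..\<bar>r0\<bar>}. \<bar>Gd2 y\<bar> \<le> \<bar>Gd2 x\<bar>"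
    using continuous_attains_sup[OF _ _ c] by auto
  thus ?thesis by (intro exI[of _ "\<bar>Gd2 x\<bar>"]) (auto simp: abs_le_iff)
qed

definition "cmin r0 = (SOME c. c > 0 \<and> (\<forall>y. \<bar>y\<bar> \<le> r0 \<longrightarrow> c \<le> Gd1 y))"
definition "Mx1 r0 = (SOME M. M \<ge> 0 \<and> (\<forall>y. \<bar>y\<bar> \<le> r0 \<longrightarrow> Gd1 y \<le> M))"
definition "Mx2 r0 = (SOME M. M \<ge> 0 \<and> (\<forall>y. \<bar>y\<bar> \<le> r0 \<longrightarrow> \<bar>Gd2 y\<bar> \<le> M))"

lemma cmin: "cmin r0 > 0" "\<bar>y\<bar> \<le> r0 \<Longrightarrow> cmin r0 \<le> Gd1 y"
  using someI_ex[OF exists_cmin[of r0]] unfolding cmin_def by auto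
lemma Mx1: "Mx1 r0 \<ge> 0" "\<bar>y\<bar> \<le> r0 \<Longrightarrow> Gd1 y \<le> Mx1 r0"
  using someI_ex[OF exists_Mx1[of r0]] unfolding Mx1_def by auto
lemma Mx2: "Mx2 r0 \<ge> 0" "\<bar>y\<bar> \<le> r0 \<Longrightarrow> \<bar>Gd2 y\<bar> \<le> Mx2 r0"
  using someI_ex[OF exists_Mx2[of r0]] unfolding Mx2_def by auto

lemma rcos_le: fixes r r0 \<psi> :: real shows "\<bar>r\<bar> \<le> r0 \<Longrightarrow> \<bar>- r * cos \<psi>\<bar> \<le> r0"
proof -
  assume "\<bar>r\<bar> \<le> r0"
  moreover have "\<bar>cos \<psi>\<bar> \<le> 1" by (rule abs_cos_le_one)
  ultimately have "\<bar>r\<bar> * \<bar>cos \<psi>\<bar> \<le> r0 * 1" by (intro mult_mono) auto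
  thus ?thesis by (simp add: abs_mult)
qed

lemma w_lower: "\<bar>r\<bar> \<le> r0 \<Longrightarrow> cmin r0 \<le> w r \<psi>"
  unfolding w_def using rcos_le cmin by blast
lemma w_upper: "\<bar>r\<bar> \<le> r0 \<Longrightarrow> w r \<psi> \<le> Mx1 r0"
  unfolding w_def using rcos_le Mx1 by blast
lemma wr_bound: "\<bar>r\<bar> \<le> r0 \<Longrightarrow> \<bar>wr r \<psi>\<bar> \<le> Mx2 r0"
proof -
  assume r: "\<bar>r\<bar> \<le> r0"
  have "\<bar>cos \<psi>\<bar> * \<bar>Gd2 (- r * cos \<psi>)\<bar> \<le> 1 * Mx2 r0"
    by (intro mult_mono) (use Mx2 rcos_le[OF r] in auto)
  thus ?thesis by (simp add: wr_def abs_mult)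
qed

lemma Wr_bound: "\<bar>r\<bar> \<le> r0 \<Longrightarrow> 0 \<le> \<phi> \<Longrightarrow> \<bar>Wr r \<phi>\<bar> \<le> Mx2 r0 * \<phi>"
  unfolding Wr_def using int_abs[of 0 \<phi> "wr r" "Mx2 r0"] wr_bound wr_int by auto

lemma W_lower: "\<bar>r\<bar> \<le> r0 \<Longrightarrow> 0 \<le> a \<Longrightarrow> a \<le> b \<Longrightarrow> cmin r0 * (b - a) \<le> W r b - W r a"
  using int_lower[of a b "cmin r0" "w r"] w_lower w_int W_diff by auto

lemma W_lower_abs: "\<bar>r\<bar> \<le> r0 \<Longrightarrow> 0 \<le> a \<Longrightarrow> 0 \<le> b \<Longrightarrow> cmin r0 * \<bar>b - a\<bar> \<le> \<bar>W r b - W r a\<bar>"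
proof -
  assume r: "\<bar>r\<bar> \<le> r0" and ab: "0 \<le> a" "0 \<le> b"
  show ?thesis
  proof (cases "a \<le> b")
    case True thus ?thesis using W_lower[OF r ab(1) True] cmin(1)[of r0] by (smt (verit) mult_nonneg_nonneg)
  next
    case False thus ?thesis using W_lower[OF r ab(2), of a] cmin(1)[of r0] by (smt (verit) mult_nonneg_nonneg)
  qed
qed

lemma T_nonneg: "0 \<le> T r"
  unfolding T_def using W_strict[of 0 "2*pi" r] W_0 by simp

definition "ph r t = (THE \<phi>. 0 \<le> \<phi> \<and> \<phi> \<le> 2 * pi \<and> W r \<phi> = t)"

lemma W_inj: "0 \<le> a \<Longrightarrow> 0 \<le> b \<Longrightarrow> W r a = W r b \<Longrightarrow> a = b"
  using W_strict[of a b r] W_strict[of b a r] by (cases a b rule: linorder_cases) auto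

lemma ph: assumes "0 \<le> t" "t \<le> T r"
  shows "0 \<le> ph r t \<and> ph r t \<le> 2 * pi \<and> W r (ph r t) = t"
proof -
  have "\<exists>\<phi>. 0 \<le> \<phi> \<and> \<phi> \<le> 2 * pi \<and> W r \<phi> = t"
    using IVT'[of "W r" 0 t "2 * pi", OF _ _ _ W_cont] assms by (auto simp: W_0 T_def)
  hence "\<exists>!\<phi>. 0 \<le> \<phi> \<and> \<phi> \<le> 2 * pi \<and> W r \<phi> = t" using W_inj by blast
  thus ?thesis unfolding ph_def by (rule theI')
qed

lemma ph_W: "0 \<le> \<phi> \<Longrightarrow> \<phi> \<le> 2 * pi \<Longrightarrow> ph r (W r \<phi>) = \<phi>"
proof -
  assume a: "0 \<le> \<phi>" "\<phi> \<le> 2 * pi"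
  have "W r \<phi> \<le> T r" unfolding T_def using W_strict[of \<phi> "2*pi" r] a by (cases "\<phi> = 2 * pi") auto
  moreover have "0 \<le> W r \<phi>" using W_strict[of 0 \<phi> r] a W_0 by (cases "\<phi> = 0") auto
  ultimately show ?thesis using ph[of "W r \<phi>" r] W_inj a by metis
qed

lemma mean_close:
  assumes "0 \<le> p" "0 \<le> q" "\<And>\<psi>. \<psi> \<in> {min p q..max p q} \<Longrightarrow> \<bar>w z \<psi> - c\<bar> \<le> e"
  shows "\<bar>(W z p - W z q) - c * (p - q)\<bar> \<le> e * \<bar>p - q\<bar>"
proof -
  have key: "\<bar>(W z b - W z a) - c * (b - a)\<bar> \<le> e * (b - a)"
    if "0 \<le> a" "a \<le> b" "\<And>\<psi>. \<psi> \<in> {a..b} \<Longrightarrow> \<bar>w z \<psi> - c\<bar> \<le> e" for a b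
  proof -
    have "W z b - W z a - c * (b - a) = integral {a..b} (\<lambda>\<psi>. w z \<psi> - c)"
      using W_diff[of a b z] that
      by (subst integral_diff) (auto intro: w_int integrable_continuous_real continuous_on_const simp: mult.commute)
    also have "\<bar>\<dots>\<bar> \<le> e * (b - a)"
      by (rule int_abs) (use that in \<open>auto intro!: integrable_continuous_real continuous_intros w_cont\<close>)
    finally show ?thesis .
  qed
  show ?thesis
  proof (cases "q \<le> p")
    case True thus ?thesis using key[of q p] assms by auto
  next
    case False
    hence "\<bar>(W z q - W z p) - c * (q - p)\<bar> \<le> e * (q - p)" using key[of p q] assms by auto
    thus ?thesis using False by (simp add: abs_minus_commute algebra_simps)
  qed
qed


lemma ph_T: assumes "0 \<le> \<theta>" "\<theta> \<le> 1"
  shows "0 \<le> ph z (\<theta> * T z) \<and> ph z (\<theta> * T z) \<le> 2 * pi \<and> W z (ph z (\<theta> * T z)) = \<theta> * T z"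
  by (rule ph) (use assms T_nonneg[of z] in \<open>auto simp: mult_left_le_one_le\<close>)

lemma quot_aux: "(A::real) \<noteq> 0 \<Longrightarrow> u \<noteq> 0 \<Longrightarrow> v \<noteq> 0 \<Longrightarrow> v / u = A / (A * u / v)"
  by simp

lemma Phi_deriv:
  assumes th: "0 \<le> \<theta>" "\<theta> \<le> 1" and r: "0 < r" "r \<le> r0"
  shows "((\<lambda>z. ph z (\<theta> * T z)) has_real_derivative
     (\<theta> * Wr r (2*pi) - Wr r (ph r (\<theta> * T r))) / w r (ph r (\<theta> * T r))) (at r within {0<..r0})"
proof -
  define S where "S = {0<..r0}"
  define \<Phi> where "\<Phi> z = ph z (\<theta> * T z)" for z
  define \<phi>0 where "\<phi>0 = \<Phi> r"
  have \<Phi>p: "0 \<le> \<Phi> z \<and> \<Phi> z \<le> 2 * pi \<and> W z (\<Phi> z) = \<theta> * T z" for z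
    unfolding \<Phi>_def by (rule ph_T[OF th])
  have rS: "r \<in> S" "convex S" using r by (auto simp: S_def)
  have "(T has_real_derivative Wr r (2*pi)) (at r within S)"
    using W_deriv_r[OF rS, of "2*pi"] by (simp add: T_def[abs_def])
  then obtain a where a: "\<And>z. T z - T r = a z * (z - r)" "continuous (at r within S) a" "a r = Wr r (2*pi)"
    unfolding DERIV_caratheodory_within by blast
  obtain b where b: "\<And>z. W z \<phi>0 - W r \<phi>0 = b z * (z - r)" "continuous (at r within S) b" "b r = Wr r \<phi>0"
    using W_deriv_r[OF rS, of \<phi>0] unfolding DERIV_caratheodory_within by blast
  have ident: "W z (\<Phi> z) - W z \<phi>0 = (\<theta> * a z - b z) * (z - r)" for z
  proof -
    have "W z (\<Phi> z) = \<theta> * T z" "W r \<phi>0 = \<theta> * T r" using \<Phi>p[of z] \<Phi>p[of r] by (auto simp: \<phi>0_def)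
    moreover have "\<theta> * T z - \<theta> * T r = \<theta> * a z * (z - r)" using a(1)[of z]
      by (metis mult.assoc right_diff_distrib)
    ultimately show ?thesis using b(1)[of z] by (simp add: algebra_simps)
  qed
  have zb: "\<bar>z\<bar> \<le> r0" if "z \<in> S" for z using that by (auto simp: S_def)
  have c0: "cmin r0 > 0" by (rule cmin)
  have \<Phi>bound: "\<bar>\<Phi> z - \<phi>0\<bar> \<le> \<bar>\<theta> * a z - b z\<bar> * \<bar>z - r\<bar> / cmin r0" if "z \<in> S" for z
  proof -
    have "cmin r0 * \<bar>\<Phi> z - \<phi>0\<bar> \<le> \<bar>W z (\<Phi> z) - W z \<phi>0\<bar>"
      by (rule W_lower_abs) (use zb[OF that] \<Phi>p[of z] \<Phi>p[of r] in \<open>auto simp: \<phi>0_def\<close>)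
    also have "\<dots> = \<bar>\<theta> * a z - b z\<bar> * \<bar>z - r\<bar>" by (simp add: ident abs_mult)
    finally show ?thesis using c0 by (simp add: field_simps)
  qed
  have lim_a: "(a \<longlongrightarrow> a r) (at r within S)" using a(2) by (simp add: continuous_within)
  have lim_b: "(b \<longlongrightarrow> b r) (at r within S)" using b(2) by (simp add: continuous_within)
  have lim_ab: "((\<lambda>z. \<theta> * a z - b z) \<longlongrightarrow> \<theta> * a r - b r) (at r within S)"
    by (intro tendsto_intros lim_a lim_b)
  have \<Phi>cont: "((\<lambda>z. \<Phi> z - \<phi>0) \<longlongrightarrow> 0) (at r within S)"
  proof (rule Lim_null_comparison)
    show "\<forall>\<^sub>F z in at r within S. norm (\<Phi> z - \<phi>0) \<le> \<bar>\<theta> * a z - b z\<bar> * \<bar>z - r\<bar> / cmin r0"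
      using \<Phi>bound by (auto simp: eventually_at_filter)
    have "((\<lambda>z. \<bar>\<theta> * a z - b z\<bar> * \<bar>z - r\<bar> / cmin r0) \<longlongrightarrow> \<bar>\<theta> * a r - b r\<bar> * \<bar>r - r\<bar> / cmin r0) (at r within S)"
      by (intro tendsto_intros lim_ab) (use c0 in auto)
    thus "((\<lambda>z. \<bar>\<theta> * a z - b z\<bar> * \<bar>z - r\<bar> / cmin r0) \<longlongrightarrow> 0) (at r within S)" by simp
  qed
  define K where "K z = (if \<Phi> z = \<phi>0 then w z \<phi>0 else (W z (\<Phi> z) - W z \<phi>0) / (\<Phi> z - \<phi>0))" for z
  have \<phi>0p: "0 \<le> \<phi>0" using \<Phi>p[of r] by (simp add: \<phi>0_def)
  have Kid: "(\<Phi> z - \<phi>0) / (z - r) = (\<theta> * a z - b z) / K z" if "z \<noteq> r" for z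
  proof (cases "\<Phi> z = \<phi>0")
    case True
    hence "(\<theta> * a z - b z) * (z - r) = 0" using ident[of z] by simp
    hence "\<theta> * a z - b z = 0" using that by simp
    thus ?thesis using True by simp
  next
    case False
    have ne: "W z (\<Phi> z) - W z \<phi>0 \<noteq> 0" using W_inj[of "\<Phi> z" \<phi>0 z] \<Phi>p[of z] \<phi>0p False by auto
    hence ne2: "\<theta> * a z - b z \<noteq> 0" using ident[of z] by auto
    have Kz: "K z = (\<theta> * a z - b z) * (z - r) / (\<Phi> z - \<phi>0)" using False by (simp add: K_def ident)
    have zr: "z - r \<noteq> 0" "\<Phi> z - \<phi>0 \<noteq> 0" using that False by auto
    show ?thesis unfolding Kz using zr ne2 by (intro quot_aux) auto
  qed
  have Klim: "(K \<longlongrightarrow> w r \<phi>0) (at r within S)"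
  proof (rule tendstoI)
    fix e :: real assume e: "e > 0"
    have "isCont (\<lambda>(r, \<psi>). w r \<psi>) (r, \<phi>0)"
      using w_cont2[of UNIV] by (simp add: continuous_on_eq_continuous_at)
    then obtain d where d: "d > 0" "\<And>x'. dist x' (r, \<phi>0) < d \<Longrightarrow> dist ((\<lambda>(r, \<psi>). w r \<psi>) x') ((\<lambda>(r, \<psi>). w r \<psi>) (r, \<phi>0)) < e / 2"
      unfolding continuous_at_eps_delta using e by (meson half_gt_zero)
    have near: "\<bar>w z p - w r \<phi>0\<bar> < e / 2" if "\<bar>z - r\<bar> < d / 2" "\<bar>p - \<phi>0\<bar> < d / 2" for z p
    proof -
      have "dist (z, p) (r, \<phi>0) \<le> \<bar>z - r\<bar> + \<bar>p - \<phi>0\<bar>"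
        unfolding dist_Pair_Pair dist_real_def using sqrt_sum_squares_le_sum_abs by simp
      hence "dist (z, p) (r, \<phi>0) < d" using that by simp
      from d(2)[OF this] show ?thesis by (simp add: dist_real_def)
    qed
    have ev1: "\<forall>\<^sub>F z in at r within S. \<bar>z - r\<bar> < d / 2"
    proof -
      have "((\<lambda>z. z) \<longlongrightarrow> r) (at r within S)" by (rule tendsto_ident_at)
      thus ?thesis using d(1) unfolding tendsto_iff dist_real_def by (meson half_gt_zero)
    qed
    have ev2: "\<forall>\<^sub>F z in at r within S. \<bar>\<Phi> z - \<phi>0\<bar> < d / 2"
    proof -
      have "\<forall>e>0. \<forall>\<^sub>F x in at r within S. \<bar>\<Phi> x - \<phi>0\<bar> < e"
        using \<Phi>cont unfolding tendsto_iff dist_real_def by simp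
      thus ?thesis using d(1) by (meson half_gt_zero)
    qed
    show "\<forall>\<^sub>F z in at r within S. dist (K z) (w r \<phi>0) < e"
      using ev1 ev2
    proof eventually_elim
      case (elim z)
      show ?case
      proof (cases "\<Phi> z = \<phi>0")
        case True thus ?thesis using near[of z \<phi>0] elim e by (simp add: K_def dist_real_def)
      next
        case False
        have "\<bar>(W z (\<Phi> z) - W z \<phi>0) - w r \<phi>0 * (\<Phi> z - \<phi>0)\<bar> \<le> e / 2 * \<bar>\<Phi> z - \<phi>0\<bar>"
        proof (rule mean_close)
          show "0 \<le> \<Phi> z" "0 \<le> \<phi>0" using \<Phi>p[of z] \<phi>0p by auto
          fix \<psi> assume "\<psi> \<in> {min (\<Phi> z) \<phi>0..max (\<Phi> z) \<phi>0}"
          hence "\<bar>\<psi> - \<phi>0\<bar> < d / 2" using elim by (auto simp: abs_if split: if_splits)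
          thus "\<bar>w z \<psi> - w r \<phi>0\<bar> \<le> e / 2" using near[of z \<psi>] elim by simp
        qed
        hence "\<bar>((W z (\<Phi> z) - W z \<phi>0) - w r \<phi>0 * (\<Phi> z - \<phi>0)) / (\<Phi> z - \<phi>0)\<bar> \<le> e / 2"
          using False by (simp add: abs_divide divide_le_eq)
        moreover have "((W z (\<Phi> z) - W z \<phi>0) - w r \<phi>0 * (\<Phi> z - \<phi>0)) / (\<Phi> z - \<phi>0) = K z - w r \<phi>0"
          using False by (simp add: K_def field_simps)
        ultimately show ?thesis using e by (simp add: dist_real_def)
      qed
    qed
  qed
  have wpos: "w r \<phi>0 \<noteq> 0" using w_pos[of r \<phi>0] by simp
  have lim: "((\<lambda>z. (\<theta> * a z - b z) / K z) \<longlongrightarrow> (\<theta> * a r - b r) / w r \<phi>0) (at r within S)"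
    by (rule tendsto_divide[OF lim_ab Klim wpos])
  have "((\<lambda>z. (\<Phi> z - \<Phi> r) / (z - r)) \<longlongrightarrow> (\<theta> * a r - b r) / w r \<phi>0) (at r within S)"
  proof (rule tendsto_cong[THEN iffD1, OF _ lim])
    show "\<forall>\<^sub>F x in at r within S. (\<theta> * a x - b x) / K x = (\<Phi> x - \<Phi> r) / (x - r)"
      using Kid unfolding \<phi>0_def by (auto simp: eventually_at_filter)
  qed
  hence "(\<Phi> has_real_derivative (\<theta> * a r - b r) / w r \<phi>0) (at r within S)"
    unfolding has_field_derivative_iff .
  thus ?thesis using a(3) b(3) by (simp add: \<Phi>_def[abs_def] \<phi>0_def S_def)
qed

end

context pot begin

lemma W_image: "W r ` {0..2*pi} = {0..T r}"
proof
  show "W r ` {0..2*pi} \<subseteq> {0..T r}"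
  proof
    fix y assume "y \<in> W r ` {0..2*pi}"
    then obtain \<phi> where p: "0 \<le> \<phi>" "\<phi> \<le> 2*pi" "y = W r \<phi>" by auto
    have "W r \<phi> \<le> T r" unfolding T_def using W_strict[of \<phi> "2*pi" r] p by (cases "\<phi> = 2 * pi") auto
    moreover have "0 \<le> W r \<phi>" using W_strict[of 0 \<phi> r] p W_0 by (cases "\<phi> = 0") auto
    ultimately show "y \<in> {0..T r}" using p by auto
  qed
  show "{0..T r} \<subseteq> W r ` {0..2*pi}"
  proof
    fix t assume "t \<in> {0..T r}"
    hence "0 \<le> ph r t \<and> ph r t \<le> 2 * pi \<and> W r (ph r t) = t" using ph by auto
    thus "t \<in> W r ` {0..2*pi}" by (metis atLeastAtMost_iff image_eqI)
  qed
qed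

lemma ph_cont: "continuous_on {0..T r} (ph r)"
  using continuous_on_inv[OF W_cont[of "2*pi" r] compact_Icc] ph_W W_image by auto

lemma ph_0: "ph r 0 = 0" using ph_W[of 0 r] W_0 by simp

lemma ph_pos: "0 < t \<Longrightarrow> t \<le> T r \<Longrightarrow> 0 < ph r t"
  using ph[of t r] W_0 by (metis less_eq_real_def less_irrefl)

lemma ph_deriv: "0 < t \<Longrightarrow> t < T r \<Longrightarrow> (ph r has_real_derivative inverse (w r (ph r t))) (at t)"
proof -
  assume t: "0 < t" "t < T r"
  show ?thesis
  proof (rule DERIV_inverse_function[where f="W r" and a=0 and b="T r"])
    show "(W r has_real_derivative w r (ph r t)) (at (ph r t))"
      using W_deriv_phi ph_pos t by simp
    show "w r (ph r t) \<noteq> 0" using w_pos[of r "ph r t"] by simp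
    show "\<And>y. 0 < y \<Longrightarrow> y < T r \<Longrightarrow> W r (ph r y) = y" using ph by simp
    show "isCont (ph r) t" using continuous_on_interior[OF ph_cont, of t r] t by simp
  qed (use t in auto)
qed

definition "Xt r t = G (- r * cos (ph r t))"
definition "Vt r t = r * sin (ph r t)"

lemma Xt_deriv: "0 < t \<Longrightarrow> t < T r \<Longrightarrow> (Xt r has_real_derivative Vt r t) (at t)"
proof -
  assume t: "0 < t" "t < T r"
  have "((\<lambda>t. G (- r * cos (ph r t))) has_real_derivative
      Gd1 (- r * cos (ph r t)) * (r * sin (ph r t) * inverse (w r (ph r t)))) (at t)"
    by (rule DERIV_chain2[OF G_deriv]) (auto intro!: derivative_eq_intros ph_deriv[OF t])
  moreover have "Gd1 (- r * cos (ph r t)) * (r * sin (ph r t) * inverse (w r (ph r t))) = Vt r t"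
    using Gd1_pos[of "- r * cos (ph r t)"] by (simp add: w_def Vt_def field_simps)
  ultimately show ?thesis by (simp add: Xt_def[abs_def])
qed

lemma Vt_deriv: "0 < t \<Longrightarrow> t < T r \<Longrightarrow> (Vt r has_real_derivative - U1 (Xt r t)) (at t)"
proof -
  assume t: "0 < t" "t < T r"
  have "((\<lambda>t. r * sin (ph r t)) has_real_derivative r * (cos (ph r t) * inverse (w r (ph r t)))) (at t)"
    by (auto intro!: derivative_eq_intros ph_deriv[OF t])
  moreover have "r * (cos (ph r t) * inverse (w r (ph r t))) = - U1 (Xt r t)"
    using Gd1_pos[of "- r * cos (ph r t)"] by (simp add: w_def Xt_def U1_G field_simps)
  ultimately show ?thesis by (simp add: Vt_def[abs_def])
qed

lemma Xt_cont: "continuous_on {0..T r} (Xt r)"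
  unfolding Xt_def[abs_def]
  by (intro continuous_on_compose2[OF G_cont_on[of UNIV]] continuous_intros ph_cont) auto

lemma Vt_cont: "continuous_on {0..T r} (Vt r)"
  unfolding Vt_def[abs_def] by (intro continuous_intros ph_cont)

lemma Xt_0: "Xt r 0 = - G r" by (simp add: Xt_def ph_0 G_odd)
lemma Vt_0: "Vt r 0 = 0" by (simp add: Vt_def ph_0)

lemma Xt_bound: "0 \<le> r \<Longrightarrow> \<bar>Xt r t\<bar> \<le> G r"
proof -
  assume r: "0 \<le> r"
  have c: "\<bar>cos (ph r t)\<bar> \<le> 1" by (rule abs_cos_le_one)
  have "\<bar>r * cos (ph r t)\<bar> \<le> r" using mult_left_mono[OF c r] r by (simp add: abs_mult)
  hence "- r \<le> - r * cos (ph r t)" "- r * cos (ph r t) \<le> r" by (auto simp: abs_le_iff)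
  hence "G (- r) \<le> Xt r t" "Xt r t \<le> G r" unfolding Xt_def by (auto intro: G_mono_le)
  thus ?thesis using G_odd[of r] by auto
qed

lemma U1_lipschitz: "\<exists>L\<ge>0. \<forall>a b. \<bar>a\<bar> \<le> K \<longrightarrow> \<bar>b\<bar> \<le> K \<longrightarrow> \<bar>U1 a - U1 b\<bar> \<le> L * \<bar>a - b\<bar>"
proof -
  have c: "continuous_on {-\<bar>K\<bar>..\<bar>K\<bar>} (\<lambda>y. \<bar>U2 y\<bar>)"
    using cont2 by (intro continuous_intros) (simp add: continuous_at_imp_continuous_on)
  obtain x where x: "x \<in> {-\<bar>K\<bar>..\<bar>K\<bar>}" "\<forall>y\<in>{-\<bar>K\<bar>..\<bar>K\<bar>}. \<bar>U2 y\<bar> \<le> \<bar>U2 x\<bar>"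
    using continuous_attains_sup[OF _ _ c] by auto
  have "\<bar>U1 a - U1 b\<bar> \<le> \<bar>U2 x\<bar> * \<bar>a - b\<bar>" if ab: "\<bar>a\<bar> \<le> K" "\<bar>b\<bar> \<le> K" for a b
  proof (cases a b rule: linorder_cases)
    case less
    obtain z where z: "a < z" "z < b" "U1 b - U1 a = (b - a) * U2 z"
      using MVT2[OF less, of U1 U2] D2 by blast
    have "\<bar>U2 z\<bar> \<le> \<bar>U2 x\<bar>" using x(2) z ab by (auto simp: abs_le_iff)
    moreover have "\<bar>U1 a - U1 b\<bar> = \<bar>U2 z\<bar> * \<bar>a - b\<bar>" using z less
      by (metis abs_minus_commute abs_mult mult.commute)
    ultimately show ?thesis by (simp add: mult_right_mono)
  next
    case greater
    obtain z where z: "b < z" "z < a" "U1 a - U1 b = (a - b) * U2 z"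
      using MVT2[OF greater, of U1 U2] D2 by blast
    have "\<bar>U2 z\<bar> \<le> \<bar>U2 x\<bar>" using x(2) z ab by (auto simp: abs_le_iff)
    moreover have "\<bar>U1 a - U1 b\<bar> = \<bar>U2 z\<bar> * \<bar>a - b\<bar>" using z greater
      by (metis abs_mult mult.commute)
    ultimately show ?thesis by (simp add: mult_right_mono)
  qed simp
  thus ?thesis by (intro exI[of _ "\<bar>U2 x\<bar>"]) auto
qed


lemma ode_unique:
  fixes x1 v1 x2 v2 :: "real \<Rightarrow> real"
  assumes c: "continuous_on {0..Tm} x1" "continuous_on {0..Tm} v1"
      "continuous_on {0..Tm} x2" "continuous_on {0..Tm} v2"
   and d1: "\<And>t. 0 < t \<Longrightarrow> t < Tm \<Longrightarrow> (x1 has_real_derivative v1 t) (at t)"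
   and d2: "\<And>t. 0 < t \<Longrightarrow> t < Tm \<Longrightarrow> (v1 has_real_derivative - U1 (x1 t)) (at t)"
   and d3: "\<And>t. 0 < t \<Longrightarrow> t < Tm \<Longrightarrow> (x2 has_real_derivative v2 t) (at t)"
   and d4: "\<And>t. 0 < t \<Longrightarrow> t < Tm \<Longrightarrow> (v2 has_real_derivative - U1 (x2 t)) (at t)"
   and i: "x1 0 = x2 0" "v1 0 = v2 0"
   and L: "L \<ge> 0" "\<And>t. 0 \<le> t \<Longrightarrow> t \<le> Tm \<Longrightarrow> \<bar>U1 (x1 t) - U1 (x2 t)\<bar> \<le> L * \<bar>x1 t - x2 t\<bar>"
   and t: "0 \<le> t" "t \<le> Tm"
  shows "x1 t = x2 t \<and> v1 t = v2 t"
proof -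
  define c where "c = 1 + L"
  define D where "D s = (x1 s - x2 s)^2 + (v1 s - v2 s)^2" for s
  define e where "e s = exp (- c * s) * D s" for s
  have e0: "e 0 = 0" using i by (simp add: e_def D_def)
  have enn: "e s \<ge> 0" for s by (simp add: e_def D_def)
  show ?thesis
  proof (cases "t = 0")
    case True thus ?thesis using i by simp
  next
    case False
    hence tp: "0 < t" using t by simp
    have ce: "continuous_on {0..t} e"
    proof -
      have "continuous_on {0..t} x1" "continuous_on {0..t} v1" "continuous_on {0..t} x2" "continuous_on {0..t} v2"
        using c by (meson atLeastatMost_subset_iff continuous_on_subset order_refl t(2))+
      thus ?thesis unfolding e_def D_def by (intro continuous_intros) auto
    qed
    have de: "(e has_real_derivative exp (- c * s) * (2 * (x1 s - x2 s) * (v1 s - v2 s)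
               + 2 * (v1 s - v2 s) * (- U1 (x1 s) + U1 (x2 s)) - c * D s)) (at s)"
      if s: "0 < s" "s < t" for s
    proof -
      have s': "0 < s" "s < Tm" using s t by auto
      have "(e has_real_derivative exp (- c * s) * (- c) * D s + exp (- c * s) *
              (2 * (x1 s - x2 s) * (v1 s - v2 s) + 2 * (v1 s - v2 s) * (- U1 (x1 s) - - U1 (x2 s)))) (at s)"
        unfolding e_def[abs_def] D_def[abs_def]
        by (auto intro!: derivative_eq_intros d1[OF s'] d2[OF s'] d3[OF s'] d4[OF s'] simp: algebra_simps)
      thus ?thesis by (rule DERIV_cong) (simp add: D_def, algebra)
    qed
    have dle: "exp (- c * s) * (2 * (x1 s - x2 s) * (v1 s - v2 s)
               + 2 * (v1 s - v2 s) * (- U1 (x1 s) + U1 (x2 s)) - c * D s) \<le> 0"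
      if s: "0 < s" "s < t" for s
    proof -
      define p where "p = x1 s - x2 s"
      define q where "q = v1 s - v2 s"
      define u where "u = U1 (x1 s) - U1 (x2 s)"
      have u: "\<bar>u\<bar> \<le> L * \<bar>p\<bar>" using L(2)[of s] s t by (simp add: u_def p_def)
      have "2 * p * q - 2 * q * u \<le> 2 * \<bar>p\<bar> * \<bar>q\<bar> + 2 * \<bar>q\<bar> * \<bar>u\<bar>"
      proof -
        have "p * q \<le> \<bar>p\<bar> * \<bar>q\<bar>" by (metis abs_ge_self abs_mult)
        moreover have "- (q * u) \<le> \<bar>q\<bar> * \<bar>u\<bar>" by (metis abs_ge_minus_self abs_mult)
        ultimately show ?thesis by linarith
      qed
      also have "\<dots> \<le> 2 * \<bar>p\<bar> * \<bar>q\<bar> + 2 * \<bar>q\<bar> * (L * \<bar>p\<bar>)"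
        using u by (intro add_left_mono mult_left_mono) auto
      also have "\<dots> = c * (2 * \<bar>p\<bar> * \<bar>q\<bar>)" by (simp add: c_def algebra_simps)
      also have "\<dots> \<le> c * (p^2 + q^2)"
      proof -
        have "0 \<le> (\<bar>p\<bar> - \<bar>q\<bar>)^2" by simp
        hence "2 * \<bar>p\<bar> * \<bar>q\<bar> \<le> p^2 + q^2" by (simp add: power2_diff)
        thus ?thesis using L(1) by (intro mult_left_mono) (auto simp: c_def)
      qed
      finally have "2 * p * q + 2 * q * (- U1 (x1 s) + U1 (x2 s)) - c * D s \<le> 0"
        by (simp add: D_def p_def q_def u_def algebra_simps)
      thus ?thesis unfolding p_def q_def by (simp add: mult_nonneg_nonpos)
    qed
    obtain l z where lz: "0 < z" "z < t" "(e has_real_derivative l) (at z)" "e t - e 0 = (t - 0) * l"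
      using MVT[OF tp ce] de unfolding real_differentiable_def by blast
    have "l \<le> 0" using DERIV_unique[OF lz(3) de[OF lz(1,2)]] dle[OF lz(1,2)] by simp
    hence "e t \<le> 0" using lz(4) e0 tp by (simp add: mult_nonneg_nonpos)
    hence "e t = 0" using enn[of t] by simp
    hence "D t = 0" by (simp add: e_def)
    thus ?thesis unfolding D_def by (simp add: sum_power2_eq_zero_iff)
  qed
qed

end

context pot begin

lemma U0_G: "U0 (G y) = m + y^2 / 2"
  using g_sq[of "G y"] by (simp add: gG P_def field_simps)

lemma G_pos: "0 < r \<Longrightarrow> 0 < G r" using G_mono[of 0 r] G_0 by simp

lemma xplus_eq: assumes "0 < r" shows "xplus U0 (m + r^2/2) = G r"
proof -
  have "0 \<le> G r \<and> U0 (G r) = m + r^2/2" using G_pos[OF assms] U0_G by simp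
  moreover have "x = G r" if "0 \<le> x \<and> U0 x = m + r^2/2" for x
  proof -
    have "U0 x = U0 (G r)" using that U0_G by simp
    thus ?thesis using that G_pos[OF assms] smono
      by (metis atLeast_iff less_eq_real_def linorder_neqE_linordered_idom order_less_irrefl strict_mono_onD)
  qed
  ultimately show ?thesis unfolding xplus_def by (rule the_equality) 
qed

lemma period_eq: assumes r: "0 < r" shows "period U0 (m + r^2/2) = T r"
proof -
  define E where "E = m + r^2/2"
  define f where "f x = 1 / sqrt (2 * (E - U0 x))" for x
  define gg where "gg \<psi> = G (- r * cos \<psi>)" for \<psi>
  define gg' where "gg' \<psi> = Gd1 (- r * cos \<psi>) * (r * sin \<psi>)" for \<psi>
  have Eg: "2 * (E - U0 (gg \<psi>)) = (r * sin \<psi>)^2" for \<psi>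
    by (simp add: E_def gg_def U0_G power_mult_distrib algebra_simps sin_squared_eq)
  have fg: "f (gg \<psi>) * gg' \<psi> = w r \<psi>" if "0 < \<psi>" "\<psi> < pi" for \<psi>
  proof -
    have s: "r * sin \<psi> > 0" using sin_gt_zero[OF that] r by simp
    have "sqrt (2 * (E - U0 (gg \<psi>))) = r * sin \<psi>" by (simp only: Eg) (use s in simp)
    hence "f (gg \<psi>) = 1 / (r * sin \<psi>)" by (simp only: f_def)
    moreover have "r \<noteq> 0" "sin \<psi> \<noteq> 0" using s by auto
    ultimately show ?thesis by (simp add: gg'_def w_def)
  qed
  have sub: "(LBINT x = ereal (gg 0)..ereal (gg pi). f x) = (LBINT \<psi> = ereal 0..ereal pi. f (gg \<psi>) * gg' \<psi>)"
  proof (rule interval_integral_substitution_nonneg(2))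
    show "ereal 0 < ereal pi" by simp
    show "(gg has_real_derivative gg' x) (at x)" for x
      unfolding gg_def[abs_def] gg'_def
      by (rule DERIV_chain2[OF G_deriv]) (auto intro!: derivative_eq_intros)
    show "isCont f (gg x)" if "ereal 0 < ereal x" "ereal x < ereal pi" for x
    proof -
      have "0 < 2 * (E - U0 (gg x))" using Eg[of x] sin_gt_zero[of x] that r by simp
      thus ?thesis unfolding f_def[abs_def] by (intro continuous_intros cont0) auto
    qed
    show "isCont gg' x" for x
      unfolding gg'_def[abs_def] by (intro continuous_intros isCont_o2[OF _ Gd1_cont])
    show "0 \<le> f (gg x)" for x
      using Eg[of x] by (simp add: f_def)
    show "0 \<le> gg' x" if "ereal 0 \<le> ereal x" "ereal x \<le> ereal pi" for x
      using that Gd1_pos[of "- r * cos x"] sin_ge_zero[of x] r by (simp add: gg'_def)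
    have cg: "isCont gg x" for x unfolding gg_def[abs_def] by (intro continuous_intros isCont_o2[OF _ G_cont])
    show "((ereal \<circ> gg \<circ> real_of_ereal) \<longlongrightarrow> ereal (gg 0)) (at_right (ereal 0))"
      using cg[of 0] by (simp add: ereal_tendsto_simps isCont_def filterlim_at_split)
    show "((ereal \<circ> gg \<circ> real_of_ereal) \<longlongrightarrow> ereal (gg pi)) (at_left (ereal pi))"
      using cg[of pi] by (simp add: ereal_tendsto_simps isCont_def filterlim_at_split)
    have "set_integrable lborel {0..pi} (w r)" by (rule borel_integrable_atLeastAtMost'[OF w_cont])
    hence "set_integrable lborel {0<..<pi} (w r)" by (rule set_integrable_subset) auto
    thus "set_integrable lborel (einterval (ereal 0) (ereal pi)) (\<lambda>x. f (gg x) * gg' x)"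
      using set_integrable_cong[of lborel lborel "{0<..<pi}" "{0<..<pi}" "\<lambda>x. f (gg x) * gg' x" "w r"] fg
      by simp
  qed
  have rhs: "(LBINT \<psi> = ereal 0..ereal pi. f (gg \<psi>) * gg' \<psi>) = W r pi"
  proof -
    have "(LBINT \<psi> = ereal 0..ereal pi. f (gg \<psi>) * gg' \<psi>) = (LBINT \<psi> = ereal 0..ereal pi. w r \<psi>)"
      by (rule interval_integral_cong) (use fg in auto)
    also have "\<dots> = integral {0..pi} (w r)"
      by (rule interval_integral_eq_integral) (auto intro: borel_integrable_atLeastAtMost'[OF w_cont])
    finally show ?thesis by (simp add: W_def)
  qed
  have "gg 0 = - G r" "gg pi = G r" by (simp_all add: gg_def G_odd)
  hence "(LBINT x = ereal (- G r)..ereal (G r). f x) = W r pi" using sub rhs by simp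
  moreover have "period U0 E = 2 * (LBINT x = ereal (- G r)..ereal (G r). f x)"
    unfolding period_def E_def xplus_eq[OF r] f_def[abs_def] E_def by simp
  ultimately show ?thesis using W_sym[of r] by (simp add: E_def T_def)
qed

end

lemma lip_from_deriv:
  fixes f :: "real \<Rightarrow> real"
  assumes d: "\<And>z. z \<in> {0<..r0} \<Longrightarrow> \<exists>D. (f has_real_derivative D) (at z within {0<..r0}) \<and> \<bar>D\<bar> \<le> L"
    and a: "a \<in> {0<..r0}" and b: "b \<in> {0<..r0}"
  shows "\<bar>f a - f b\<bar> \<le> L * \<bar>a - b\<bar>"
proof -
  have key: "\<bar>f v - f u\<bar> \<le> L * (v - u)" if uv: "u < v" "u \<in> {0<..r0}" "v \<in> {0<..r0}" for u v
  proof -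
    have cont: "continuous_on {u..v} f"
    proof -
      have "continuous (at z within {0<..r0}) f" if "z \<in> {0<..r0}" for z
        using d[OF that] DERIV_continuous by blast
      hence "continuous_on {0<..r0} f" by (simp add: continuous_on_eq_continuous_within)
      thus ?thesis by (rule continuous_on_subset) (use uv in auto)
    qed
    have dz: "\<exists>D. (f has_real_derivative D) (at z) \<and> \<bar>D\<bar> \<le> L" if zz: "u < z" "z < v" for z
    proof -
      have zi: "z \<in> interior {0<..r0}"
        using interior_maximal[of "{0<..<r0}" "{0<..r0}"] that uv by auto
      obtain D where "(f has_real_derivative D) (at z within {0<..r0})" "\<bar>D\<bar> \<le> L"
        using d[of z] zz uv by auto
      thus ?thesis using at_within_interior[OF zi] by auto
    qed
    obtain l z where lz: "u < z" "z < v" "(f has_real_derivative l) (at z)" "f v - f u = (v - u) * l"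
      using MVT[OF uv(1) cont] dz unfolding real_differentiable_def by blast
    obtain D where D: "(f has_real_derivative D) (at z)" "\<bar>D\<bar> \<le> L" using dz lz by blast
    have "l = D" using DERIV_unique lz(3) D(1) by blast
    hence "\<bar>f v - f u\<bar> = (v - u) * \<bar>D\<bar>" using lz uv by (simp add: abs_mult)
    also have "\<dots> \<le> (v - u) * L" using D uv by (intro mult_left_mono) auto
    finally show ?thesis by (simp add: mult.commute)
  qed
  show ?thesis
  proof (cases a b rule: linorder_cases)
    case less thus ?thesis using key[OF less a b] by (simp add: abs_minus_commute)
  next
    case greater thus ?thesis using key[OF greater b a] by simp
  qed simp
qed

lemma sqrt_diff_le: "0 \<le> x \<Longrightarrow> 0 \<le> y \<Longrightarrow> \<bar>sqrt x - sqrt y\<bar> \<le> sqrt \<bar>x - y\<bar>"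
proof -
  have k: "sqrt x - sqrt y \<le> sqrt (x - y)" if "0 \<le> y" "y \<le> x" for x y :: real
    using sqrt_add_le_add_sqrt[of "x - y" y] that by simp
  assume "0 \<le> x" "0 \<le> y"
  thus ?thesis
    using k[of y x] k[of x y] real_sqrt_le_mono[of y x] real_sqrt_le_mono[of x y]
    by (cases "y \<le> x") (auto simp: abs_if)
qed

context pot begin

definition "xr \<theta> r = G (- r * cos (ph r (\<theta> * T r)))"
definition "vr \<theta> r = r * sin (ph r (\<theta> * T r))"
definition "Bd r0 = 4 * pi * Mx2 r0 / cmin r0"
definition "Lx r0 = Mx1 r0 * (1 + r0 * Bd r0)"
definition "Lv r0 = 1 + r0 * Bd r0"

lemma Bd_nonneg: "0 \<le> Bd r0" using Mx2(1)[of r0] cmin(1)[of r0] by (simp add: Bd_def)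

lemma Dphi_bound:
  assumes "0 \<le> \<theta>" "\<theta> \<le> 1" "0 < r" "r \<le> r0" "0 \<le> \<phi>" "\<phi> \<le> 2 * pi"
  shows "\<bar>(\<theta> * Wr r (2*pi) - Wr r \<phi>) / w r \<phi>\<bar> \<le> Bd r0"
proof -
  have r: "\<bar>r\<bar> \<le> r0" using assms by simp
  have "\<bar>Wr r (2*pi)\<bar> \<le> Mx2 r0 * (2 * pi)" using Wr_bound[OF r] by simp
  hence 1: "\<bar>\<theta> * Wr r (2*pi)\<bar> \<le> Mx2 r0 * (2 * pi)"
    using assms by (simp add: abs_mult) (metis dual_order.trans mult_left_le_one_le abs_ge_zero)
  have "\<bar>Wr r \<phi>\<bar> \<le> Mx2 r0 * \<phi>" using Wr_bound[OF r assms(5)] .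
  also have "\<dots> \<le> Mx2 r0 * (2 * pi)" using assms Mx2(1)[of r0] by (intro mult_left_mono) auto
  finally have 2: "\<bar>Wr r \<phi>\<bar> \<le> Mx2 r0 * (2 * pi)" .
  have "4 * pi * Mx2 r0 = Mx2 r0 * (2 * pi) + Mx2 r0 * (2 * pi)" by simp
  hence num: "\<bar>\<theta> * Wr r (2*pi) - Wr r \<phi>\<bar> \<le> 4 * pi * Mx2 r0"
    using 1 2 abs_triangle_ineq4[of "\<theta> * Wr r (2*pi)" "Wr r \<phi>"] by linarith
  have wl: "cmin r0 \<le> w r \<phi>" using w_lower[OF r] .
  have cp: "0 < cmin r0" by (rule cmin)
  have "\<bar>(\<theta> * Wr r (2*pi) - Wr r \<phi>) / w r \<phi>\<bar> = \<bar>\<theta> * Wr r (2*pi) - Wr r \<phi>\<bar> / w r \<phi>"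
    using w_pos[of r \<phi>] by (simp add: abs_divide)
  also have "\<dots> \<le> 4 * pi * Mx2 r0 / cmin r0"
    using num wl cp by (intro frac_le) auto
  finally show ?thesis by (simp add: Bd_def)
qed

lemma xr_deriv:
  assumes th: "0 \<le> \<theta>" "\<theta> \<le> 1" and r: "0 < r" "r \<le> r0"
  shows "\<exists>D. (xr \<theta> has_real_derivative D) (at r within {0<..r0}) \<and> \<bar>D\<bar> \<le> Lx r0"
proof -
  define \<phi> where "\<phi> = ph r (\<theta> * T r)"
  define Dp where "Dp = (\<theta> * Wr r (2*pi) - Wr r \<phi>) / w r \<phi>"
  have dp: "((\<lambda>z. ph z (\<theta> * T z)) has_real_derivative Dp) (at r within {0<..r0})"
    using Phi_deriv[OF th r] by (simp add: Dp_def \<phi>_def)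
  have \<phi>p: "0 \<le> \<phi>" "\<phi> \<le> 2 * pi" using ph_T[OF th, of r] by (auto simp: \<phi>_def)
  have Dpb: "\<bar>Dp\<bar> \<le> Bd r0" unfolding Dp_def by (rule Dphi_bound[OF th r \<phi>p])
  have d: "(xr \<theta> has_real_derivative Gd1 (- r * cos \<phi>) * (- cos \<phi> + r * sin \<phi> * Dp)) (at r within {0<..r0})"
  proof -
    have "((\<lambda>z. - z * cos (ph z (\<theta> * T z))) has_real_derivative
          - 1 * cos \<phi> + - r * (- sin \<phi> * Dp)) (at r within {0<..r0})"
      by (auto intro!: derivative_eq_intros dp simp: \<phi>_def)
    from DERIV_chain[OF G_deriv this] show ?thesis
      by (simp add: xr_def[abs_def] o_def \<phi>_def algebra_simps)
  qed
  have "\<bar>Gd1 (- r * cos \<phi>) * (- cos \<phi> + r * sin \<phi> * Dp)\<bar> \<le> Mx1 r0 * (1 + r0 * Bd r0)"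
  proof -
    have g: "\<bar>Gd1 (- r * cos \<phi>)\<bar> \<le> Mx1 r0" using Mx1(2)[OF rcos_le[of r r0 \<phi>]] abs_of_pos[OF Gd1_pos] r by simp
    have "\<bar>- cos \<phi> + r * sin \<phi> * Dp\<bar> \<le> \<bar>cos \<phi>\<bar> + \<bar>r\<bar> * \<bar>sin \<phi>\<bar> * \<bar>Dp\<bar>"
      by (metis abs_minus_cancel abs_mult abs_triangle_ineq)
    also have "\<dots> \<le> 1 + r0 * 1 * Bd r0"
      using r Dpb Bd_nonneg[of r0] abs_cos_le_one[of \<phi>] abs_sin_le_one[of \<phi>]
      by (intro add_mono mult_mono) auto
    finally have "\<bar>- cos \<phi> + r * sin \<phi> * Dp\<bar> \<le> 1 + r0 * Bd r0" by simp
    thus ?thesis using g by (simp add: abs_mult mult_mono)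
  qed
  thus ?thesis using d by (auto simp: Lx_def)
qed

lemma vr_deriv:
  assumes th: "0 \<le> \<theta>" "\<theta> \<le> 1" and r: "0 < r" "r \<le> r0"
  shows "\<exists>D. (vr \<theta> has_real_derivative D) (at r within {0<..r0}) \<and> \<bar>D\<bar> \<le> Lv r0"
proof -
  define \<phi> where "\<phi> = ph r (\<theta> * T r)"
  define Dp where "Dp = (\<theta> * Wr r (2*pi) - Wr r \<phi>) / w r \<phi>"
  have dp: "((\<lambda>z. ph z (\<theta> * T z)) has_real_derivative Dp) (at r within {0<..r0})"
    using Phi_deriv[OF th r] by (simp add: Dp_def \<phi>_def)
  have \<phi>p: "0 \<le> \<phi>" "\<phi> \<le> 2 * pi" using ph_T[OF th, of r] by (auto simp: \<phi>_def)
  have Dpb: "\<bar>Dp\<bar> \<le> Bd r0" unfolding Dp_def by (rule Dphi_bound[OF th r \<phi>p])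
  have d: "(vr \<theta> has_real_derivative 1 * sin \<phi> + r * (cos \<phi> * Dp)) (at r within {0<..r0})"
    unfolding vr_def[abs_def] by (auto intro!: derivative_eq_intros dp simp: \<phi>_def)
  have "\<bar>1 * sin \<phi> + r * (cos \<phi> * Dp)\<bar> \<le> \<bar>sin \<phi>\<bar> + \<bar>r\<bar> * (\<bar>cos \<phi>\<bar> * \<bar>Dp\<bar>)"
    by (metis abs_mult abs_triangle_ineq mult_1)
  also have "\<dots> \<le> 1 + r0 * (1 * Bd r0)"
    using r Dpb Bd_nonneg[of r0] abs_cos_le_one[of \<phi>] abs_sin_le_one[of \<phi>]
    by (intro add_mono mult_mono) auto
  finally show ?thesis using d by (auto simp: Lv_def)
qed

end

context pot begin

lemma U0_bound: assumes "U0 x \<le> m + R^2/2" "0 \<le> R" shows "\<bar>x\<bar> \<le> G R"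
proof -
  have "(g x)^2 \<le> R^2" using g_sq[of x] assms(1) by (simp add: P_def)
  hence "\<bar>g x\<bar> \<le> R" using assms(2) by (simp add: abs_le_square_iff power2_le_iff_abs_le)
  hence "- R \<le> g x" "g x \<le> R" by auto
  hence "G (- R) \<le> x" "x \<le> G R" using G_mono_le Gg by metis+
  thus ?thesis using G_odd[of R] by auto
qed

lemma final:
  fixes X V :: "real \<Rightarrow> real \<Rightarrow> real" and E0 :: real
  assumes E0: "U0 0 < E0"
    and X_init: "\<forall>E\<in>{U0 0<..E0}. X 0 E = - xplus U0 E \<and> V 0 E = 0"
    and X_ode: "\<forall>E\<in>{U0 0<..E0}. \<forall>t.
                  ((\<lambda>s. X s E) has_real_derivative V t E) (at t) \<and>
                  ((\<lambda>s. V s E) has_real_derivative - U1 (X t E)) (at t)"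
  shows "\<exists>C. \<forall>\<theta>\<in>{0..1::real}.
     (\<forall>E\<in>{U0 0<..E0}. \<exists>D.
        ((\<lambda>e. X (\<theta> * period U0 e) e) has_real_derivative D) (at E within {U0 0<..E0}) \<and>
        \<bar>D\<bar> \<le> C * (E - U0 0) powr (-1/2)) \<and>
     (\<forall>E1\<in>{U0 0<..E0}. \<forall>E2\<in>{U0 0<..E0}.
        \<bar>X (\<theta> * period U0 E1) E1 - X (\<theta> * period U0 E2) E2\<bar> \<le> C * sqrt \<bar>E1 - E2\<bar>) \<and>
     (\<forall>E\<in>{U0 0<..E0}. \<exists>D.
        ((\<lambda>e. V (\<theta> * period U0 e) e) has_real_derivative D) (at E within {U0 0<..E0}) \<and>
        \<bar>D\<bar> \<le> C * (E - U0 0) powr (-1/2)) \<and>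
     (\<forall>E1\<in>{U0 0<..E0}. \<forall>E2\<in>{U0 0<..E0}.
        \<bar>V (\<theta> * period U0 E1) E1 - V (\<theta> * period U0 E2) E2\<bar> \<le> C * sqrt \<bar>E1 - E2\<bar>)"
proof -
  define S where "S = {m<..E0}"
  have S_eq: "{U0 0<..E0} = S" by (simp add: S_def m_def)
  define r0 where "r0 = sqrt (2 * (E0 - m))"
  define \<rho> where "\<rho> e = sqrt (2 * (e - m))" for e
  have r0p: "0 < r0" using E0 by (simp add: r0_def m_def)
  have \<rho>p: "0 < \<rho> e" "\<rho> e \<le> r0" "e = m + (\<rho> e)^2 / 2" if "e \<in> S" for e
    using that by (auto simp: S_def \<rho>_def r0_def field_simps)
  have E0r: "E0 = m + r0^2/2" using E0 by (simp add: r0_def m_def field_simps)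
  obtain L where L: "L \<ge> 0" "\<And>a b. \<bar>a\<bar> \<le> G r0 \<Longrightarrow> \<bar>b\<bar> \<le> G r0 \<Longrightarrow> \<bar>U1 a - U1 b\<bar> \<le> L * \<bar>a - b\<bar>"
    using U1_lipschitz[of "G r0"] by blast
  have ident: "X (\<theta> * period U0 e) e = xr \<theta> (\<rho> e) \<and> V (\<theta> * period U0 e) e = vr \<theta> (\<rho> e)"
    if e: "e \<in> S" and th: "0 \<le> \<theta>" "\<theta> \<le> 1" for e \<theta>
  proof -
    define r where "r = \<rho> e"
    have r: "0 < r" "r \<le> r0" "e = m + r^2/2" using \<rho>p[OF e] by (auto simp: r_def)
    have eS: "e \<in> {U0 0<..E0}" using e S_eq by simp
    have per: "period U0 e = T r" using period_eq[OF r(1)] r(3) by simp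
    have ode: "\<And>t. ((\<lambda>s. X s e) has_real_derivative V t e) (at t)"
              "\<And>t. ((\<lambda>s. V s e) has_real_derivative - U1 (X t e)) (at t)"
      using X_ode eS by auto
    have init: "X 0 e = - G r" "V 0 e = 0" using X_init eS xplus_eq[OF r(1)] r(3) by auto
    have energy: "(V s e)^2 / 2 + U0 (X s e) = e" for s
    proof -
      have "\<forall>s. ((\<lambda>s. (V s e)^2 / 2 + U0 (X s e)) has_real_derivative 0) (at s)"
      proof
        fix s
        have "((\<lambda>s. (V s e)^2 / 2 + U0 (X s e)) has_real_derivative
               2 * V s e * (- U1 (X s e)) / 2 + U1 (X s e) * V s e) (at s)"
          by (auto intro!: derivative_eq_intros ode DERIV_chain2[OF D1])
        thus "((\<lambda>s. (V s e)^2 / 2 + U0 (X s e)) has_real_derivative 0) (at s)" by simp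
      qed
      hence "(V s e)^2 / 2 + U0 (X s e) = (V 0 e)^2 / 2 + U0 (X 0 e)"
        by (rule DERIV_isconst_all)
      also have "\<dots> = e" using init even[of "G r"] U0_G[of r] r(3) by simp
      finally show ?thesis .
    qed
    have Xb: "\<bar>X s e\<bar> \<le> G r0" for s
    proof (rule U0_bound)
      have "U0 (X s e) \<le> e" using energy[of s] zero_le_power2[of "V s e"] by linarith
      also have "e \<le> E0" using e by (simp add: S_def)
      finally show "U0 (X s e) \<le> m + r0^2/2" using E0r by simp
    qed (use r0p in simp)
    have Xtb: "\<bar>Xt r s\<bar> \<le> G r0" for s
      using Xt_bound[of r s] G_mono_le[OF r(2)] r by simp
    have cX: "continuous_on {0..T r} (\<lambda>s. X s e)" "continuous_on {0..T r} (\<lambda>s. V s e)"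
      using DERIV_isCont[OF ode(1)] DERIV_isCont[OF ode(2)] by (auto intro!: continuous_at_imp_continuous_on)
    define t where "t = \<theta> * T r"
    have t: "0 \<le> t" "t \<le> T r" using th T_nonneg[of r] by (auto simp: t_def mult_left_le_one_le)
    have "X t e = Xt r t \<and> V t e = Vt r t"
    proof (rule ode_unique[of "T r" "\<lambda>s. X s e" "\<lambda>s. V s e" "Xt r" "Vt r" L t])
      show "continuous_on {0..T r} (Xt r)" "continuous_on {0..T r} (Vt r)"
        using Xt_cont Vt_cont by auto
      show "\<And>t. 0 < t \<Longrightarrow> t < T r \<Longrightarrow> (Xt r has_real_derivative Vt r t) (at t)" by (rule Xt_deriv)
      show "\<And>t. 0 < t \<Longrightarrow> t < T r \<Longrightarrow> (Vt r has_real_derivative - U1 (Xt r t)) (at t)" by (rule Vt_deriv)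
      show "X 0 e = Xt r 0" "V 0 e = Vt r 0" using init by (simp_all add: Xt_0 Vt_0)
      show "\<And>t. 0 \<le> t \<Longrightarrow> t \<le> T r \<Longrightarrow> \<bar>U1 (X t e) - U1 (Xt r t)\<bar> \<le> L * \<bar>X t e - Xt r t\<bar>"
        using L(2) Xb Xtb by blast
    qed (use cX ode L t in auto)
    thus ?thesis by (simp add: per t_def xr_def vr_def Xt_def Vt_def r_def)
  qed
  have \<rho>deriv: "(\<rho> has_real_derivative 1 / \<rho> e) (at e within S)" if e: "e \<in> S" for e
  proof -
    have pos: "0 < 2 * (e - m)" using e by (simp add: S_def)
    have d2: "((\<lambda>e. 2 * (e - m)) has_real_derivative 2 * (1 - 0)) (at e)"
      by (rule DERIV_cmult[OF DERIV_diff[OF DERIV_ident DERIV_const]])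
    have "((\<lambda>e. sqrt (2 * (e - m))) has_real_derivative inverse (sqrt (2 * (e - m))) / 2 * (2 * (1 - 0))) (at e)"
      by (rule DERIV_chain2[OF DERIV_real_sqrt[OF pos] d2])
    moreover have "inverse (sqrt (2 * (e - m))) / 2 * (2 * (1 - 0)) = 1 / \<rho> e"
      by (simp add: \<rho>_def inverse_eq_divide)
    ultimately have "(\<rho> has_real_derivative 1 / \<rho> e) (at e)"
      unfolding \<rho>_def[abs_def] by simp
    thus ?thesis by (rule has_field_derivative_at_within)
  qed
  have \<rho>img: "\<rho> ` S \<subseteq> {0<..r0}" using \<rho>p by auto
  have powr_eq: "(e - m) powr (-1/2) = 1 / sqrt (e - m)" if "e \<in> S" for e
    using that by (simp add: S_def powr_minus_divide powr_half_sqrt)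
  have \<rho>_eq: "\<rho> e = sqrt 2 * sqrt (e - m)" for e unfolding \<rho>_def by (rule real_sqrt_mult)
  have \<rho>lip: "\<bar>\<rho> e1 - \<rho> e2\<bar> \<le> sqrt 2 * sqrt \<bar>e1 - e2\<bar>" if "e1 \<in> S" "e2 \<in> S" for e1 e2
  proof -
    have "\<bar>\<rho> e1 - \<rho> e2\<bar> \<le> sqrt \<bar>2 * (e1 - m) - 2 * (e2 - m)\<bar>"
      unfolding \<rho>_def by (rule sqrt_diff_le) (use that in \<open>auto simp: S_def\<close>)
    also have "\<bar>2 * (e1 - m) - 2 * (e2 - m)\<bar> = 2 * \<bar>e1 - e2\<bar>" by (simp add: abs_if)
    finally show ?thesis by (simp add: real_sqrt_mult)
  qed
  define C where "C = sqrt 2 * (Lx r0 + Lv r0)"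
  have Lx0: "0 \<le> Lx r0" using Mx1(1)[of r0] Bd_nonneg[of r0] r0p by (simp add: Lx_def)
  have Lv0: "0 \<le> Lv r0" using Bd_nonneg[of r0] r0p by (simp add: Lv_def)
  have s2: "1 \<le> sqrt (2::real)" by simp
  have CLx: "Lx r0 \<le> C" "Lv r0 \<le> C" "sqrt 2 * Lx r0 \<le> C" "sqrt 2 * Lv r0 \<le> C"
  proof -
    have a: "Lx r0 + Lv r0 \<le> sqrt 2 * (Lx r0 + Lv r0)"
      using mult_right_mono[OF s2, of "Lx r0 + Lv r0"] Lx0 Lv0 by simp
    have b: "sqrt 2 * Lx r0 \<le> sqrt 2 * (Lx r0 + Lv r0)" "sqrt 2 * Lv r0 \<le> sqrt 2 * (Lx r0 + Lv r0)"
      using Lx0 Lv0 by (intro mult_left_mono; simp)+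
    show "Lx r0 \<le> C" using a Lv0 unfolding C_def by linarith
    show "Lv r0 \<le> C" using a Lx0 unfolding C_def by linarith
    show "sqrt 2 * Lx r0 \<le> C" using b unfolding C_def by linarith
    show "sqrt 2 * Lv r0 \<le> C" using b unfolding C_def by linarith
  qed
  have dstep: "\<exists>D. ((\<lambda>e. F (\<theta> * period U0 e) e) has_real_derivative D) (at E within S) \<and>
        \<bar>D\<bar> \<le> C * (E - m) powr (-1/2)"
    if E: "E \<in> S" and th: "0 \<le> \<theta>" "\<theta> \<le> 1"
      and Fid: "\<And>e. e \<in> S \<Longrightarrow> F (\<theta> * period U0 e) e = h (\<rho> e)"
      and hd: "\<exists>D. (h has_real_derivative D) (at (\<rho> E) within {0<..r0}) \<and> \<bar>D\<bar> \<le> Lh"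
      and Lh: "Lh \<le> C" for F h Lh E \<theta>
  proof -
    obtain D where D: "(h has_real_derivative D) (at (\<rho> E) within {0<..r0})" "\<bar>D\<bar> \<le> Lh" using hd by blast
    have "((h \<circ> \<rho>) has_real_derivative D * (1 / \<rho> E)) (at E within S)"
      by (rule DERIV_image_chain[OF DERIV_subset[OF D(1) \<rho>img] \<rho>deriv[OF E]])
    hence d: "((\<lambda>e. F (\<theta> * period U0 e) e) has_real_derivative D * (1 / \<rho> E)) (at E within S)"
      by (rule has_field_derivative_transform_within[where d=1]) (use E Fid in auto)
    have rp: "0 < \<rho> E" using \<rho>p[OF E] by simp
    have sp: "0 < sqrt (E - m)" using E by (simp add: S_def)
    have "\<bar>D * (1 / \<rho> E)\<bar> = \<bar>D\<bar> / \<rho> E" using rp by (simp add: abs_mult)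
    also have "\<dots> \<le> C / \<rho> E" using D(2) Lh rp by (simp add: divide_right_mono)
    also have "\<dots> = C / sqrt 2 * (1 / sqrt (E - m))" by (simp add: \<rho>_eq)
    also have "\<dots> \<le> C * (1 / sqrt (E - m))"
    proof -
      have "0 \<le> C" using Lh D(2) by linarith
      hence "C / sqrt 2 \<le> C / 1" by (rule divide_left_mono[OF s2]) simp
      hence "C / sqrt 2 \<le> C" by simp
      thus ?thesis using sp by (intro mult_right_mono) auto
    qed
    finally show ?thesis using d powr_eq[OF E] by auto
  qed
  have lstep: "\<bar>F (\<theta> * period U0 E1) E1 - F (\<theta> * period U0 E2) E2\<bar> \<le> C * sqrt \<bar>E1 - E2\<bar>"
    if E: "E1 \<in> S" "E2 \<in> S" and Fid: "\<And>e. e \<in> S \<Longrightarrow> F (\<theta> * period U0 e) e = h (\<rho> e)"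
      and hd: "\<And>z. z \<in> {0<..r0} \<Longrightarrow> \<exists>D. (h has_real_derivative D) (at z within {0<..r0}) \<and> \<bar>D\<bar> \<le> Lh"
      and Lh: "sqrt 2 * Lh \<le> C" "0 \<le> Lh" for F h Lh E1 E2 \<theta>
  proof -
    have "\<bar>h (\<rho> E1) - h (\<rho> E2)\<bar> \<le> Lh * \<bar>\<rho> E1 - \<rho> E2\<bar>"
      by (rule lip_from_deriv[OF hd]) (use \<rho>p E in auto)
    also have "\<dots> \<le> Lh * (sqrt 2 * sqrt \<bar>E1 - E2\<bar>)" by (rule mult_left_mono[OF \<rho>lip[OF E] Lh(2)])
    also have "\<dots> = (sqrt 2 * Lh) * sqrt \<bar>E1 - E2\<bar>" by simp
    also have "\<dots> \<le> C * sqrt \<bar>E1 - E2\<bar>" using Lh(1) by (rule mult_right_mono) simp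
    finally show ?thesis using Fid E by simp
  qed
  show ?thesis unfolding S_eq unfolding m_def[symmetric]
  proof (rule exI[of _ C], intro ballI conjI)
    fix \<theta> :: real assume "\<theta> \<in> {0..1}"
    hence th: "0 \<le> \<theta>" "\<theta> \<le> 1" by auto
    show "\<exists>D. ((\<lambda>e. X (\<theta> * period U0 e) e) has_real_derivative D) (at E within S) \<and>
        \<bar>D\<bar> \<le> C * (E - m) powr (- 1 / 2)" if "E \<in> S" for E
      by (rule dstep[OF that th, where h="xr \<theta>" and Lh="Lx r0"]) (use ident th \<rho>p that xr_deriv[OF th] CLx in auto)
    show "\<exists>D. ((\<lambda>e. V (\<theta> * period U0 e) e) has_real_derivative D) (at E within S) \<and>
        \<bar>D\<bar> \<le> C * (E - m) powr (- 1 / 2)" if "E \<in> S" for E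
      by (rule dstep[OF that th, where h="vr \<theta>" and Lh="Lv r0"]) (use ident th \<rho>p that vr_deriv[OF th] CLx in auto)
    show "\<bar>X (\<theta> * period U0 E1) E1 - X (\<theta> * period U0 E2) E2\<bar> \<le> C * sqrt \<bar>E1 - E2\<bar>"
      if "E1 \<in> S" "E2 \<in> S" for E1 E2
      by (rule lstep[OF that, where h="xr \<theta>" and Lh="Lx r0"]) (use ident th xr_deriv[OF th] CLx Lx0 in auto)
    show "\<bar>V (\<theta> * period U0 E1) E1 - V (\<theta> * period U0 E2) E2\<bar> \<le> C * sqrt \<bar>E1 - E2\<bar>"
      if "E1 \<in> S" "E2 \<in> S" for E1 E2
      by (rule lstep[OF that, where h="vr \<theta>" and Lh="Lv r0"]) (use ident th vr_deriv[OF th] CLx Lv0 in auto)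
  qed
qed

end

theorem propositionA3:
  fixes E0 M0 R0 :: real
    and phi :: "real \<Rightarrow> real"
    and U0 U1 U2 U3 :: "real \<Rightarrow> real"
    and X V :: "real \<Rightarrow> real \<Rightarrow> real"
  assumes E0_pos: "E0 > 0"
    and phi_choice: "(\<exists>k::real. k \<ge> 1 \<and> phi = polytrope E0 k) \<or> phi = king E0"
    \<comment> \<open>steady state of the plane-symmetric Vlasov--Poisson system with mass M0\<close>
    and f0_int: "\<forall>x. integrable lborel (\<lambda>v. phi (v\<^sup>2 / 2 + U0 x))"
    and rho0_int: "integrable lborel (dens phi U0)"
    and poisson: "\<forall>x. integrable lborel (\<lambda>y. \<bar>x - y\<bar> * dens phi U0 y) \<and>
                     U0 x = 2 * pi * (LINT y|lborel. \<bar>x - y\<bar> * dens phi U0 y)"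
    and mass: "M0 = (LINT x|lborel. dens phi U0 x)" and M0_pos: "M0 > 0"
    \<comment> \<open>stated properties of U0 (consequences of the above, recorded in the context)\<close>
    and U0_D1: "\<forall>x. (U0 has_real_derivative U1 x) (at x)"
    and U0_D2: "\<forall>x. (U1 has_real_derivative U2 x) (at x)"
    and U0_D3: "\<forall>x. (U2 has_real_derivative U3 x) (at x)"
    and U3_cont: "continuous_on UNIV U3"
    and U0_even: "\<forall>x. U0 (- x) = U0 x"
    and U0_convex: "convex_on UNIV U0"
    and U0_mono: "strict_mono_on {0..} U0"
    and U2_0: "U2 0 = 4 * pi * dens phi U0 0" and U2_0_pos: "U2 0 > 0"
    and R0_pos: "R0 > 0"
    and support: "closure {x. dens phi U0 x \<noteq> 0} = {-R0..R0}"
    and E0_eq: "E0 = U0 R0"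
    \<comment> \<open>characteristic flow started at (x_-(E), 0)\<close>
    and X_init: "\<forall>E\<in>{U0 0<..E0}. X 0 E = - xplus U0 E \<and> V 0 E = 0"
    and X_ode: "\<forall>E\<in>{U0 0<..E0}. \<forall>t.
                  ((\<lambda>s. X s E) has_real_derivative V t E) (at t) \<and>
                  ((\<lambda>s. V s E) has_real_derivative - U1 (X t E)) (at t)"
  shows "\<exists>C. \<forall>\<theta>\<in>{0..1::real}.
     (\<forall>E\<in>{U0 0<..E0}. \<exists>D.
        ((\<lambda>e. X (\<theta> * period U0 e) e) has_real_derivative D) (at E within {U0 0<..E0}) \<and>
        \<bar>D\<bar> \<le> C * (E - U0 0) powr (-1/2)) \<and>
     (\<forall>E1\<in>{U0 0<..E0}. \<forall>E2\<in>{U0 0<..E0}.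
        \<bar>X (\<theta> * period U0 E1) E1 - X (\<theta> * period U0 E2) E2\<bar> \<le> C * sqrt \<bar>E1 - E2\<bar>) \<and>
     (\<forall>E\<in>{U0 0<..E0}. \<exists>D.
        ((\<lambda>e. V (\<theta> * period U0 e) e) has_real_derivative D) (at E within {U0 0<..E0}) \<and>
        \<bar>D\<bar> \<le> C * (E - U0 0) powr (-1/2)) \<and>
     (\<forall>E1\<in>{U0 0<..E0}. \<forall>E2\<in>{U0 0<..E0}.
        \<bar>V (\<theta> * period U0 E1) E1 - V (\<theta> * period U0 E2) E2\<bar> \<le> C * sqrt \<bar>E1 - E2\<bar>)"
proof -
  interpret pot U0 U1 U2 U3
    by unfold_locales (use U0_D1 U0_D2 U0_D3 U3_cont U0_even U0_convex U0_mono U2_0_pos in auto)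
  have "U0 0 < E0" using U0_mono R0_pos E0_eq by (auto simp: strict_mono_on_def)
  from final[OF this X_init X_ode] show ?thesis .
qed

end
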